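(* Let $\Theta=\{1,2\}$, let $m\ge2$, let $P_1,\dots,P_m$ be experiments, and let $(A,u)$ be a decision problem with $A=\{a_1,\dots,a_n\}$ satisfying: $u(1,a_1)<\cdots<u(1,a_n)$; $u(2,a_1)>\cdots>u(2,a_n)$; $u(\cdot,a_1)=(0,0)$; and no $a_i$ is weakly*-dominated (there is no $\alpha\in\Delta(A\setminus\{a_i\})$ with $u(\cdot,a_i)\le u(\cdot,\alpha)$ componentwise). Let $(A_1^*,u_1^* ),\dots,(A_{n-1}^*,u_{n-1}^* )$ be its canonical decomposition. Then for every $j\in\{1,\dots,m\}$, $$V(P_1,\dots,P_m;(A,u))=V(P_{-j};(A,u))$$ if and only if $V(P_j;(A_\ell^*,u_\ell^* ))\le\max_{j'\ne j}V(P_{j'};(A_\ell^*,u_\ell^* ))$ for all $\ell=1,\dots,n-1$. Here $P_{-j}$ denotes the collection $(P_{j'})_{j'\ne j}$.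
   Context: $\Theta$ is a finite set of states. A decision problem is a pair $(A,u)$ with $A$ a finite nonempty action set and $u:\Theta\times A\to\mathbb{R}$; for $\alpha\in\Delta(A)$ write $u(\theta,\alpha)=\sum_a\alpha(a)u(\theta,a)$. An experiment is a map $P:\Theta\to\Delta(Y)$ with $Y$ a finite signal set. Given experiments $P_j:\Theta\to\Delta(Y_j)$, $j=1,\dots,m$, let $\mathbf Y=Y_1\times\cdots\times Y_m$ and let $\mathcal P(P_1,\dots,P_m)$ be the set of experiments $P:\Theta\to\Delta(\mathbf Y)$ whose $j$-th marginal is $P_j(\cdot|\theta)$ for every $\theta$ and $j$. A strategy is a map $\sigma:\mathbf Y\to\Delta(A)$. Define $V(P_1,\dots,P_m;(A,u))=\max_{\sigma}\min_{P\in\mathcal P(P_1,\dots,P_m)}\sum_{\theta}\sum_{\mathbf y}P(\mathbf y|\theta)u(\theta,\sigma(\mathbf y))$ (and analogously for any subcollection of the experiments); for a single experiment, $V(P;(A,u))=\max_{\sigma:Y\to\Delta(A)}\sum_\theta\sum_y P(y|\theta)u(\theta,\sigma(y))$. For $(A,u)$ with actions ordered $a_1,\dots,a_n$ as in the claim, its canonical decomposition is the collection of $n-1$ binary-action problems $(A_\ell^*,u_\ell^* )$ with $A_\ell^*=\{0,1\}$, $u_\ell^*(\cdot,0)=(0,0)$ and $u_\ell^*(\cdot,1)=u(\cdot,a_{\ell+1})-u(\cdot,a_\ell)$. *)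

theory Defs
  imports Complex_Main "HOL-Library.FuncSet"
begin

definition prob_on :: "'a set \<Rightarrow> ('a \<Rightarrow> real) \<Rightarrow> bool" where
  "prob_on S p \<longleftrightarrow> (\<forall>x. 0 \<le> p x) \<and> (\<forall>x. x \<notin> S \<longrightarrow> p x = 0) \<and> sum p S = 1"

definition mixed_util :: "nat set \<Rightarrow> (nat \<Rightarrow> nat \<Rightarrow> real) \<Rightarrow> nat \<Rightarrow> (nat \<Rightarrow> real) \<Rightarrow> real" where
  "mixed_util Ac u th alpha = (\<Sum>a\<in>Ac. alpha a * u th a)"

text \<open>Joint experiments over the product of the signal sets Y j (j in J) with the
  prescribed marginals P j (the set P(P_j, j in J)).  Signal profiles are elements of PiE J Y.\<close>
definition couplings ::
  "nat set \<Rightarrow> nat set \<Rightarrow> (nat \<Rightarrow> 'y set) \<Rightarrow> (nat \<Rightarrow> nat \<Rightarrow> 'y \<Rightarrow> real)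
    \<Rightarrow> (nat \<Rightarrow> (nat \<Rightarrow> 'y) \<Rightarrow> real) set" where
  "couplings Th J Y P = {Q. \<forall>th\<in>Th. prob_on (PiE J Y) (Q th) \<and>
      (\<forall>j\<in>J. \<forall>y\<in>Y j. (\<Sum>ys\<in>{ys \<in> PiE J Y. ys j = y}. Q th ys) = P j th y)}"

definition strategies :: "nat set \<Rightarrow> (nat \<Rightarrow> 'y set) \<Rightarrow> nat set \<Rightarrow> ((nat \<Rightarrow> 'y) \<Rightarrow> nat \<Rightarrow> real) set" where
  "strategies J Y Ac = {\<sigma>. \<forall>ys\<in>PiE J Y. prob_on Ac (\<sigma> ys)}"

definition payoff ::
  "nat set \<Rightarrow> nat set \<Rightarrow> (nat \<Rightarrow> 'y set) \<Rightarrow> nat set \<Rightarrow> (nat \<Rightarrow> nat \<Rightarrow> real)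
    \<Rightarrow> (nat \<Rightarrow> (nat \<Rightarrow> 'y) \<Rightarrow> real) \<Rightarrow> ((nat \<Rightarrow> 'y) \<Rightarrow> nat \<Rightarrow> real) \<Rightarrow> real" where
  "payoff Th J Y Ac u Q \<sigma> = (\<Sum>th\<in>Th. \<Sum>ys\<in>PiE J Y. Q th ys * mixed_util Ac u th (\<sigma> ys))"

definition Vmulti ::
  "nat set \<Rightarrow> nat set \<Rightarrow> (nat \<Rightarrow> 'y set) \<Rightarrow> (nat \<Rightarrow> nat \<Rightarrow> 'y \<Rightarrow> real)
    \<Rightarrow> nat set \<Rightarrow> (nat \<Rightarrow> nat \<Rightarrow> real) \<Rightarrow> real" where
  "Vmulti Th J Y P Ac u =
     (SUP \<sigma>\<in>strategies J Y Ac. INF Q\<in>couplings Th J Y P. payoff Th J Y Ac u Q \<sigma>)"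

definition Vsingle ::
  "nat set \<Rightarrow> 'y set \<Rightarrow> (nat \<Rightarrow> 'y \<Rightarrow> real) \<Rightarrow> nat set \<Rightarrow> (nat \<Rightarrow> nat \<Rightarrow> real) \<Rightarrow> real" where
  "Vsingle Th Yj Pj Ac u =
     (SUP \<sigma>\<in>{\<sigma>. \<forall>y\<in>Yj. prob_on Ac (\<sigma> y)}.
        \<Sum>th\<in>Th. \<Sum>y\<in>Yj. Pj th y * mixed_util Ac u th (\<sigma> y))"

text \<open>Canonical decomposition: l-th binary problem, actions {0,1},
  u*(.,0) = 0, u*(.,1) = u(., a_(l+1)) - u(., a_l).\<close>
definition canon_u :: "(nat \<Rightarrow> nat \<Rightarrow> real) \<Rightarrow> nat \<Rightarrow> nat \<Rightarrow> nat \<Rightarrow> real" where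
  "canon_u u l = (\<lambda>th a. if a = 1 then u th (Suc l) - u th l else 0)"

end

theory Submission
  imports Defs
begin

lemma sum_if_delta_mult:
  fixes c :: real
  assumes "finite A" "a \<in> A"
  shows "(\<Sum>x\<in>A. (if x = a then c else 0) * f x) = c * f a"
proof -
  have "(\<Sum>x\<in>A. (if x = a then c else 0) * f x) = (\<Sum>x\<in>A. (if x = a then c * f a else 0))"
    by (rule sum.cong) simp_all
  also have "\<dots> = c * f a" using assms by (simp add: sum.delta)
  finally show ?thesis .
qed

definition spr :: "('x \<Rightarrow> real) \<Rightarrow> 'x \<Rightarrow> 'x \<Rightarrow> 'x \<Rightarrow> real \<Rightarrow> real \<Rightarrow> real \<Rightarrow> 'x \<Rightarrow> real" where
  "spr \<mu> a p q \<epsilon> \<alpha> \<beta> = (\<lambda>x. \<mu> x - (if x = a then \<epsilon> else 0) + (if x = p then \<alpha> else 0) + (if x = q then \<beta> else 0))"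

lemma sum_spr:
  assumes "finite A" "a \<in> A" "p \<in> A" "q \<in> A"
  shows "(\<Sum>x\<in>A. spr \<mu> a p q \<epsilon> \<alpha> \<beta> x * f x) = (\<Sum>x\<in>A. \<mu> x * f x) - \<epsilon> * f a + \<alpha> * f p + \<beta> * f q"
proof -
  have "(\<Sum>x\<in>A. spr \<mu> a p q \<epsilon> \<alpha> \<beta> x * f x) =
     (\<Sum>x\<in>A. \<mu> x * f x) - (\<Sum>x\<in>A. (if x = a then \<epsilon> else 0) * f x)
      + (\<Sum>x\<in>A. (if x = p then \<alpha> else 0) * f x) + (\<Sum>x\<in>A. (if x = q then \<beta> else 0) * f x)"
  proof -
    have "(\<Sum>x\<in>A. spr \<mu> a p q \<epsilon> \<alpha> \<beta> x * f x) = (\<Sum>x\<in>A. \<mu> x * f x - (if x = a then \<epsilon> else 0) * f x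
      + (if x = p then \<alpha> else 0) * f x + (if x = q then \<beta> else 0) * f x)"
      unfolding spr_def by (rule sum.cong) (simp_all add: ring_distribs)
    then show ?thesis by (simp only: sum.distrib sum_subtractf)
  qed
  then show ?thesis using assms by (simp add: sum_if_delta_mult)
qed

lemma sum_spr1:
  assumes "finite A" "a \<in> A" "p \<in> A" "q \<in> A"
  shows "(\<Sum>x\<in>A. spr \<mu> a p q \<epsilon> \<alpha> \<beta> x) = (\<Sum>x\<in>A. \<mu> x) - \<epsilon> + \<alpha> + \<beta>"
  using sum_spr[OF assms, of \<mu> \<epsilon> \<alpha> \<beta> "\<lambda>_. 1"] by simp

lemma row_zero:
  fixes f :: "'a \<Rightarrow> real"
  assumes "finite A" "\<forall>y. 0 \<le> f y" "sum f A = 0" "y \<in> A"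
  shows "f y = 0"
proof -
  have "\<forall>x\<in>A. 0 \<le> f x" using assms(2) by simp
  then have "\<forall>x\<in>A. f x = 0" using sum_nonneg_eq_0_iff[OF assms(1), of f] assms(3) by blast
  then show ?thesis using assms(4) by simp
qed

lemma spread_glue:
  fixes \<mu> :: "'x \<Rightarrow> real" and pos :: "'x \<Rightarrow> real"
  assumes fin: "finite A" and inA: "a \<in> A" "p \<in> A" "q \<in> A"
    and dist: "a \<noteq> p" "a \<noteq> q" "p \<noteq> q"
    and nn: "\<forall>x\<in>A. 0 \<le> \<mu> x"
    and eps: "0 \<le> \<epsilon>" "\<epsilon> \<le> \<mu> a" and ab: "0 \<le> \<alpha>" "0 \<le> \<beta>" "\<alpha> + \<beta> = \<epsilon>"
    and mean: "\<alpha> * pos p + \<beta> * pos q = \<epsilon> * pos a"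
    and pnn: "\<forall>x y. 0 \<le> \<pi>' x y"
    and rows: "\<forall>x\<in>A. sum (\<pi>' x) A = spr \<mu> a p q \<epsilon> \<alpha> \<beta> x \<and>
                 (\<Sum>y\<in>A. \<pi>' x y * pos y) = spr \<mu> a p q \<epsilon> \<alpha> \<beta> x * pos x"
    and cols: "\<forall>y\<in>A. (\<Sum>x\<in>A. \<pi>' x y) = \<nu> y"
  shows "\<exists>\<pi>. (\<forall>x y. 0 \<le> \<pi> x y) \<and> (\<forall>x\<in>A. sum (\<pi> x) A = \<mu> x \<and> (\<Sum>y\<in>A. \<pi> x y * pos y) = \<mu> x * pos x)
            \<and> (\<forall>y\<in>A. (\<Sum>x\<in>A. \<pi> x y) = \<nu> y)"
proof -
  define \<mu>' where "\<mu>' = spr \<mu> a p q \<epsilon> \<alpha> \<beta>"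
  have mua: "\<mu>' a = \<mu> a - \<epsilon>" and mup: "\<mu>' p = \<mu> p + \<alpha>" and muq: "\<mu>' q = \<mu> q + \<beta>"
    using dist unfolding \<mu>'_def spr_def by auto
  have mux: "\<mu>' x = \<mu> x" if "x \<noteq> a" "x \<noteq> p" "x \<noteq> q" for x
    using that unfolding \<mu>'_def spr_def by auto
  define cp where "cp = \<alpha> / \<mu>' p"
  define cq where "cq = \<beta> / \<mu>' q"
  define dp where "dp = \<mu> p / \<mu>' p - 1"
  define dq where "dq = \<mu> q / \<mu>' q - 1"
  define \<pi> where "\<pi> = (\<lambda>x y. \<pi>' x y + (if x = a then cp * \<pi>' p y + cq * \<pi>' q y else 0)
        + (if x = p then dp * \<pi>' p y else 0) + (if x = q then dq * \<pi>' q y else 0))"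
  have mupnn: "0 \<le> \<mu> p" "0 \<le> \<mu> q" using nn inA by auto
  have cpmu: "cp * \<mu>' p = \<alpha>"
  proof (cases "\<mu>' p = 0")
    case True then have "\<alpha> = 0" using mup mupnn ab by linarith
    then show ?thesis unfolding cp_def by simp
  next
    case False then show ?thesis unfolding cp_def by simp
  qed
  have cqmu: "cq * \<mu>' q = \<beta>"
  proof (cases "\<mu>' q = 0")
    case True then have "\<beta> = 0" using muq mupnn ab by linarith
    then show ?thesis unfolding cq_def by simp
  next
    case False then show ?thesis unfolding cq_def by simp
  qed
  have dpmu: "(1 + dp) * \<mu>' p = \<mu> p"
  proof (cases "\<mu>' p = 0")
    case True then have "\<mu> p = 0" using mup mupnn ab by linarith
    then show ?thesis using True by simp
  next
    case False then show ?thesis unfolding dp_def by (simp add: field_simps)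
  qed
  have dqmu: "(1 + dq) * \<mu>' q = \<mu> q"
  proof (cases "\<mu>' q = 0")
    case True then have "\<mu> q = 0" using muq mupnn ab by linarith
    then show ?thesis using True by simp
  next
    case False then show ?thesis unfolding dq_def by (simp add: field_simps)
  qed
  have rowp0: "\<pi>' p y = 0" if "\<mu>' p = 0" "y \<in> A" for y
    using row_zero[OF fin, of "\<pi>' p"] pnn rows inA that unfolding \<mu>'_def by auto
  have rowq0: "\<pi>' q y = 0" if "\<mu>' q = 0" "y \<in> A" for y
    using row_zero[OF fin, of "\<pi>' q"] pnn rows inA that unfolding \<mu>'_def by auto
  have colp: "(cp + dp) * \<pi>' p y = 0" if "y \<in> A" for y
  proof (cases "\<mu>' p = 0")
    case True then show ?thesis using rowp0 that by simp
  next
    case False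
    then have "cp + dp = 0" unfolding cp_def dp_def using mup by (simp add: field_simps)
    then show ?thesis by simp
  qed
  have colq: "(cq + dq) * \<pi>' q y = 0" if "y \<in> A" for y
  proof (cases "\<mu>' q = 0")
    case True then show ?thesis using rowq0 that by simp
  next
    case False
    then have "cq + dq = 0" unfolding cq_def dq_def using muq by (simp add: field_simps)
    then show ?thesis by simp
  qed
  have cpnn: "0 \<le> cp" "0 \<le> cq" unfolding cp_def cq_def using mup muq mupnn ab by auto
  have dpnn: "0 \<le> 1 + dp" "0 \<le> 1 + dq" unfolding dp_def dq_def using mup muq mupnn ab by auto
  have "\<forall>x y. 0 \<le> \<pi> x y"
  proof (intro allI)
    fix x y
    have h1: "0 \<le> \<pi>' x y" "0 \<le> \<pi>' p y" "0 \<le> \<pi>' q y" using pnn by auto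
    show "0 \<le> \<pi> x y"
    proof (cases "x = a")
      case True then show ?thesis unfolding \<pi>_def using dist h1 cpnn by auto
    next
      case F1: False
      show ?thesis
      proof (cases "x = p")
        case True
        then have "\<pi> x y = (1 + dp) * \<pi>' p y" unfolding \<pi>_def using dist by (simp add: algebra_simps)
        then show ?thesis using dpnn h1 by simp
      next
        case F2: False
        show ?thesis
        proof (cases "x = q")
          case True
          then have "\<pi> x y = (1 + dq) * \<pi>' q y" unfolding \<pi>_def using dist by (simp add: algebra_simps)
          then show ?thesis using dpnn h1 by simp
        qed (use F1 F2 h1 in \<open>simp add: \<pi>_def\<close>)
      qed
    qed
  qed
  moreover have "\<forall>x\<in>A. sum (\<pi> x) A = \<mu> x \<and> (\<Sum>y\<in>A. \<pi> x y * pos y) = \<mu> x * pos x"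
  proof
    fix x assume xA: "x \<in> A"
    have gen: "(\<Sum>y\<in>A. \<pi> x y * f y) = (\<Sum>y\<in>A. \<pi>' x y * f y)
        + (if x = a then cp * (\<Sum>y\<in>A. \<pi>' p y * f y) + cq * (\<Sum>y\<in>A. \<pi>' q y * f y) else 0)
        + (if x = p then dp * (\<Sum>y\<in>A. \<pi>' p y * f y) else 0)
        + (if x = q then dq * (\<Sum>y\<in>A. \<pi>' q y * f y) else 0)" for f
      unfolding \<pi>_def by (simp add: algebra_simps sum.distrib sum_distrib_left)
    have s1: "(\<Sum>y\<in>A. \<pi>' z y * 1) = \<mu>' z" if "z \<in> A" for z using rows that unfolding \<mu>'_def by simp
    have s2: "(\<Sum>y\<in>A. \<pi>' z y * pos y) = \<mu>' z * pos z" if "z \<in> A" for z using rows that unfolding \<mu>'_def by simp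
    have A1: "sum (\<pi> x) A = \<mu> x"
    proof -
      have "sum (\<pi> x) A = (\<Sum>y\<in>A. \<pi> x y * 1)" by simp
      also have "\<dots> = \<mu>' x + (if x = a then cp * \<mu>' p + cq * \<mu>' q else 0)
          + (if x = p then dp * \<mu>' p else 0) + (if x = q then dq * \<mu>' q else 0)"
        using gen[of "\<lambda>_. 1"] s1 xA inA by simp
      also have "\<dots> = \<mu> x"
      proof (cases "x = a")
        case True then show ?thesis using cpmu cqmu mua dist ab by simp
      next
        case F1: False
        show ?thesis
        proof (cases "x = p")
          case True then show ?thesis using dpmu dist F1 by (simp add: algebra_simps)
        next
          case F2: False
          show ?thesis
          proof (cases "x = q")
            case True then show ?thesis using dqmu dist F1 F2 by (simp add: algebra_simps)
          qed (use F1 F2 mux in simp)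
        qed
      qed
      finally show ?thesis .
    qed
    have A2: "(\<Sum>y\<in>A. \<pi> x y * pos y) = \<mu> x * pos x"
    proof -
      have "(\<Sum>y\<in>A. \<pi> x y * pos y) = \<mu>' x * pos x + (if x = a then cp * (\<mu>' p * pos p) + cq * (\<mu>' q * pos q) else 0)
          + (if x = p then dp * (\<mu>' p * pos p) else 0) + (if x = q then dq * (\<mu>' q * pos q) else 0)"
        using gen[of pos] s2 xA inA by simp
      also have "\<dots> = \<mu> x * pos x"
      proof -
        have e1: "cp * (\<mu>' p * pos p) = \<alpha> * pos p" using cpmu by (metis mult.assoc)
        have e2: "cq * (\<mu>' q * pos q) = \<beta> * pos q" using cqmu by (metis mult.assoc)
        have e3: "\<mu>' p * pos p + dp * (\<mu>' p * pos p) = \<mu> p * pos p" using dpmu by (metis distrib_right mult.assoc mult_1)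
        have e4: "\<mu>' q * pos q + dq * (\<mu>' q * pos q) = \<mu> q * pos q" using dqmu by (metis distrib_right mult.assoc mult_1)
        show ?thesis
        proof (cases "x = a")
          case True
          then have "\<mu>' x * pos x + (if x = a then cp * (\<mu>' p * pos p) + cq * (\<mu>' q * pos q) else 0)
          + (if x = p then dp * (\<mu>' p * pos p) else 0) + (if x = q then dq * (\<mu>' q * pos q) else 0)
            = (\<mu> a - \<epsilon>) * pos a + (cp * (\<mu>' p * pos p) + cq * (\<mu>' q * pos q))" using mua dist by simp
          also have "\<dots> = (\<mu> a - \<epsilon>) * pos a + (\<alpha> * pos p + \<beta> * pos q)" by (simp only: e1 e2)
          also have "\<dots> = \<mu> x * pos x" using mean True by (simp add: algebra_simps)
          finally show ?thesis .
        next
          case F1: False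
          show ?thesis
          proof (cases "x = p")
            case True then show ?thesis using e3 dist by (simp add: algebra_simps)
          next
            case F2: False
            show ?thesis
            proof (cases "x = q")
              case True then show ?thesis using e4 dist by (simp add: algebra_simps)
            qed (use F1 F2 mux in simp)
          qed
        qed
      qed
      finally show ?thesis .
    qed
    show "sum (\<pi> x) A = \<mu> x \<and> (\<Sum>y\<in>A. \<pi> x y * pos y) = \<mu> x * pos x" using A1 A2 by simp
  qed
  moreover have "\<forall>y\<in>A. (\<Sum>x\<in>A. \<pi> x y) = \<nu> y"
  proof
    fix y assume yA: "y \<in> A"
    have "(\<Sum>x\<in>A. \<pi> x y) = (\<Sum>x\<in>A. \<pi>' x y)
        + (\<Sum>x\<in>A. (if x = a then 1 else 0) * (cp * \<pi>' p y + cq * \<pi>' q y))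
        + (\<Sum>x\<in>A. (if x = p then 1 else 0) * (dp * \<pi>' p y))
        + (\<Sum>x\<in>A. (if x = q then 1 else 0) * (dq * \<pi>' q y))"
    proof -
      have "(\<Sum>x\<in>A. \<pi> x y) = (\<Sum>x\<in>A. \<pi>' x y + (if x = a then 1 else 0) * (cp * \<pi>' p y + cq * \<pi>' q y)
        + (if x = p then 1 else 0) * (dp * \<pi>' p y) + (if x = q then 1 else 0) * (dq * \<pi>' q y))"
        by (rule sum.cong) (simp_all add: \<pi>_def)
      then show ?thesis by (simp only: sum.distrib)
    qed
    also have "\<dots> = (\<Sum>x\<in>A. \<pi>' x y) + (cp * \<pi>' p y + cq * \<pi>' q y) + dp * \<pi>' p y + dq * \<pi>' q y"
      using fin inA by (simp add: sum_if_delta_mult)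
    also have "\<dots> = (\<Sum>x\<in>A. \<pi>' x y) + (cp + dp) * \<pi>' p y + (cq + dq) * \<pi>' q y"
      by (simp add: algebra_simps)
    also have "\<dots> = (\<Sum>x\<in>A. \<pi>' x y)" by (simp only: colp[OF yA] colq[OF yA] add_0_right)
    also have "\<dots> = \<nu> y" using yA cols by simp
    finally show "(\<Sum>x\<in>A. \<pi> x y) = \<nu> y" .
  qed
  ultimately show ?thesis by blast
qed

lemma tent:
  fixes pp pa pq \<alpha> \<beta> \<epsilon> c :: real
  assumes "pp \<le> pa" "pa \<le> pq" "0 \<le> \<alpha>" "0 \<le> \<beta>" "\<alpha> + \<beta> = \<epsilon>" "\<alpha> * pp + \<beta> * pq = \<epsilon> * pa"
  shows "0 \<le> \<alpha> * max 0 (pp - c) + \<beta> * max 0 (pq - c) - \<epsilon> * max 0 (pa - c)"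
    and "c \<le> pp \<Longrightarrow> \<alpha> * max 0 (pp - c) + \<beta> * max 0 (pq - c) - \<epsilon> * max 0 (pa - c) = 0"
    and "pq \<le> c \<Longrightarrow> \<alpha> * max 0 (pp - c) + \<beta> * max 0 (pq - c) - \<epsilon> * max 0 (pa - c) = 0"
    and "pp < c \<Longrightarrow> c < pq \<Longrightarrow> 0 < \<alpha> \<Longrightarrow> 0 < \<beta> \<Longrightarrow> 0 < \<alpha> * max 0 (pp - c) + \<beta> * max 0 (pq - c) - \<epsilon> * max 0 (pa - c)"
proof -
  have lin: "\<alpha> * (pp - c) + \<beta> * (pq - c) - \<epsilon> * (pa - c) = 0"
  proof -
    have e6: "\<alpha> * pp + \<beta> * pq = (\<alpha> + \<beta>) * pa" using assms(5,6) by simp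
    have "\<alpha> * (pp - c) + \<beta> * (pq - c) - (\<alpha> + \<beta>) * (pa - c) = (\<alpha> * pp + \<beta> * pq) - (\<alpha> + \<beta>) * pa"
      by (simp add: algebra_simps)
    then show ?thesis using e6 assms(5) by simp
  qed
  show "0 \<le> \<alpha> * max 0 (pp - c) + \<beta> * max 0 (pq - c) - \<epsilon> * max 0 (pa - c)"
  proof (cases "c \<le> pa")
    case True
    have "\<alpha> * (pp - c) \<le> \<alpha> * max 0 (pp - c)" using assms(3) by (simp add: mult_left_mono)
    moreover have "max 0 (pq - c) = pq - c" "max 0 (pa - c) = pa - c" using True assms(2) by auto
    ultimately show ?thesis using lin by linarith
  next
    case False
    then have "max 0 (pa - c) = 0" by simp
    then show ?thesis using assms(3,4) by simp
  qed
  show "c \<le> pp \<Longrightarrow> \<alpha> * max 0 (pp - c) + \<beta> * max 0 (pq - c) - \<epsilon> * max 0 (pa - c) = 0"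
  proof -
    assume "c \<le> pp"
    then have "max 0 (pp - c) = pp - c" "max 0 (pq - c) = pq - c" "max 0 (pa - c) = pa - c" using assms(1,2) by auto
    then show ?thesis using lin by simp
  qed
  show "pq \<le> c \<Longrightarrow> \<alpha> * max 0 (pp - c) + \<beta> * max 0 (pq - c) - \<epsilon> * max 0 (pa - c) = 0"
  proof -
    assume "pq \<le> c"
    then have "max 0 (pp - c) = 0" "max 0 (pq - c) = 0" "max 0 (pa - c) = 0" using assms(1,2) by auto
    then show ?thesis by simp
  qed
  show "pp < c \<Longrightarrow> c < pq \<Longrightarrow> 0 < \<alpha> \<Longrightarrow> 0 < \<beta> \<Longrightarrow> 0 < \<alpha> * max 0 (pp - c) + \<beta> * max 0 (pq - c) - \<epsilon> * max 0 (pa - c)"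
  proof -
    assume h: "pp < c" "c < pq" "0 < \<alpha>" "0 < \<beta>"
    show ?thesis
    proof (cases "c \<le> pa")
      case True
      then have "max 0 (pp - c) = 0" "max 0 (pq - c) = pq - c" "max 0 (pa - c) = pa - c" using h by auto
      then have "\<alpha> * max 0 (pp - c) + \<beta> * max 0 (pq - c) - \<epsilon> * max 0 (pa - c) = \<alpha> * (c - pp)"
        using lin by (simp add: algebra_simps)
      then show ?thesis using h by simp
    next
      case False
      then have "max 0 (pp - c) = 0" "max 0 (pq - c) = pq - c" "max 0 (pa - c) = 0" using h by auto
      then show ?thesis using h by simp
    qed
  qed
qed

lemma maxconv:
  fixes z a b l :: real
  assumes "0 \<le> lam" "lam \<le> 1" "l = lam * a + (1 - lam) * b" "a \<le> b"
  shows "max 0 (z - l) \<le> lam * max 0 (z - a) + (1 - lam) * max 0 (z - b)"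
    and "z \<le> a \<or> b \<le> z \<Longrightarrow> max 0 (z - l) = lam * max 0 (z - a) + (1 - lam) * max 0 (z - b)"
proof -
  have e: "z - l = lam * (z - a) + (1 - lam) * (z - b)" using assms(3) by (simp add: algebra_simps)
  have m1: "lam * (z - a) \<le> lam * max 0 (z - a)" "(1 - lam) * (z - b) \<le> (1 - lam) * max 0 (z - b)"
    using assms(1,2) by (simp_all add: mult_left_mono)
  have m2: "0 \<le> lam * max 0 (z - a)" "0 \<le> (1 - lam) * max 0 (z - b)" using assms(1,2) by simp_all
  show "max 0 (z - l) \<le> lam * max 0 (z - a) + (1 - lam) * max 0 (z - b)"
    using e m1 m2 by linarith
  show "z \<le> a \<or> b \<le> z \<Longrightarrow> max 0 (z - l) = lam * max 0 (z - a) + (1 - lam) * max 0 (z - b)"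
  proof -
    assume "z \<le> a \<or> b \<le> z"
    then show ?thesis
    proof
      assume "z \<le> a"
      have "lam * (z - a) \<le> 0" using assms(1) \<open>z \<le> a\<close> by (simp add: mult_nonneg_nonpos)
      moreover have "(1 - lam) * (z - b) \<le> 0" using assms(2,4) \<open>z \<le> a\<close> by (simp add: mult_nonneg_nonpos)
      ultimately have "z - l \<le> 0" using e by linarith
      then show ?thesis using \<open>z \<le> a\<close> assms(4) by simp
    next
      assume "b \<le> z"
      then have "max 0 (z - a) = z - a" "max 0 (z - b) = z - b" using assms(4) by auto
      moreover have "0 \<le> lam * (z - a)" using assms(1,4) \<open>b \<le> z\<close> by simp
      moreover have "0 \<le> (1 - lam) * (z - b)" using assms(2) \<open>b \<le> z\<close> by simp
      moreover have "0 \<le> z - l" using e calculation(3,4) by linarith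
      ultimately show ?thesis using e by simp
    qed
  qed
qed

locale strg =
  fixes A :: "'x set" and gp :: "nat \<Rightarrow> 'x" and K :: nat and s :: "nat \<Rightarrow> real"
    and pos :: "'x \<Rightarrow> real" and \<nu> :: "'x \<Rightarrow> real"
  assumes finA: "finite A" and K1: "1 \<le> K"
    and gp_in: "\<And>i. i \<le> K \<Longrightarrow> gp i \<in> A"
    and gp_inj: "inj_on gp {..K}"
    and pos_gp: "\<And>i. i \<le> K \<Longrightarrow> pos (gp i) = s i"
    and smono: "\<And>i j. i < j \<Longrightarrow> j \<le> K \<Longrightarrow> s i < s j"
    and pos_lo: "\<And>x. x \<in> A \<Longrightarrow> s 0 \<le> pos x"
    and pos_hi: "\<And>x. x \<in> A \<Longrightarrow> pos x \<le> s K"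
    and nu_nn: "\<And>x. x \<in> A \<Longrightarrow> 0 \<le> \<nu> x"
    and nu_off: "\<And>x. x \<in> A \<Longrightarrow> x \<notin> gp ` {..K} \<Longrightarrow> \<nu> x = 0"
begin

definition C :: "('x \<Rightarrow> real) \<Rightarrow> real \<Rightarrow> real" where
  "C \<mu> c = (\<Sum>x\<in>A. \<mu> x * max 0 (pos x - c))"
definition G :: "('x \<Rightarrow> real) \<Rightarrow> nat \<Rightarrow> real" where
  "G \<mu> l = C \<nu> (s l) - C \<mu> (s l)"
definition good :: "('x \<Rightarrow> real) \<Rightarrow> bool" where
  "good \<mu> \<longleftrightarrow> (\<forall>x\<in>A. 0 \<le> \<mu> x) \<and> sum \<mu> A = sum \<nu> A \<and> (\<Sum>x\<in>A. \<mu> x * pos x) = (\<Sum>x\<in>A. \<nu> x * pos x)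
       \<and> (\<forall>l\<le>K. 0 \<le> G \<mu> l)"
definition transp :: "('x \<Rightarrow> real) \<Rightarrow> ('x \<Rightarrow> 'x \<Rightarrow> real) \<Rightarrow> bool" where
  "transp \<mu> \<pi> \<longleftrightarrow> (\<forall>x y. 0 \<le> \<pi> x y) \<and> (\<forall>x\<in>A. sum (\<pi> x) A = \<mu> x \<and> (\<Sum>y\<in>A. \<pi> x y * pos y) = \<mu> x * pos x)
       \<and> (\<forall>y\<in>A. (\<Sum>x\<in>A. \<pi> x y) = \<nu> y)"
definition off :: "'x set" where "off = A - gp ` {..K}"
definition N :: "('x \<Rightarrow> real) \<Rightarrow> nat" where
  "N \<mu> = card {x\<in>off. 0 < \<mu> x} * (K+2)^2 + card {l\<in>{..K}. 0 < G \<mu> l} * (K+2)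
        + card {l\<in>{..K}. 0 < \<mu> (gp l) \<and> 0 < G \<mu> l}"

lemma smono_le: "i \<le> j \<Longrightarrow> j \<le> K \<Longrightarrow> s i \<le> s j"
  using smono[of i j] by (cases "i = j") auto

lemma card_le_K: "card {l\<in>{..K}. P l} \<le> K + 1"
proof -
  have "card {l\<in>{..K}. P l} \<le> card {..K}" by (rule card_mono) auto
  then show ?thesis by simp
qed

lemma finoff: "finite off" unfolding off_def using finA by simp

lemma C_spr:
  assumes "a \<in> A" "p \<in> A" "q \<in> A"
  shows "C (spr \<mu> a p q \<epsilon> \<alpha> \<beta>) c = C \<mu> c - \<epsilon> * max 0 (pos a - c) + \<alpha> * max 0 (pos p - c) + \<beta> * max 0 (pos q - c)"
  unfolding C_def using sum_spr[OF finA assms] by simp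

lemma G_spr:
  assumes "a \<in> A" "p \<in> A" "q \<in> A"
  shows "G (spr \<mu> a p q \<epsilon> \<alpha> \<beta>) l = G \<mu> l
     - (\<alpha> * max 0 (pos p - s l) + \<beta> * max 0 (pos q - s l) - \<epsilon> * max 0 (pos a - s l))"
  unfolding G_def using C_spr[OF assms] by simp

lemma good_spr:
  assumes g: "good \<mu>" and inA: "a \<in> A" "p \<in> A" "q \<in> A"
    and eps: "\<epsilon> \<le> \<mu> a" and ab: "0 \<le> \<alpha>" "0 \<le> \<beta>" "\<alpha> + \<beta> = \<epsilon>"
    and mean: "\<alpha> * pos p + \<beta> * pos q = \<epsilon> * pos a"
    and dist: "a \<noteq> p" "a \<noteq> q"
    and Gnn: "\<forall>l\<le>K. 0 \<le> G (spr \<mu> a p q \<epsilon> \<alpha> \<beta>) l"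
  shows "good (spr \<mu> a p q \<epsilon> \<alpha> \<beta>)"
proof -
  have nn: "\<forall>x\<in>A. 0 \<le> spr \<mu> a p q \<epsilon> \<alpha> \<beta> x"
  proof
    fix x assume "x \<in> A"
    then have "0 \<le> \<mu> x" using g unfolding good_def by auto
    then show "0 \<le> spr \<mu> a p q \<epsilon> \<alpha> \<beta> x" unfolding spr_def using eps ab dist by auto
  qed
  have "sum (spr \<mu> a p q \<epsilon> \<alpha> \<beta>) A = sum \<mu> A" using sum_spr1[OF finA inA] ab by simp
  moreover have "(\<Sum>x\<in>A. spr \<mu> a p q \<epsilon> \<alpha> \<beta> x * pos x) = (\<Sum>x\<in>A. \<mu> x * pos x)"
    using sum_spr[OF finA inA, of \<mu> \<epsilon> \<alpha> \<beta> pos] mean by simp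
  ultimately show ?thesis using g nn Gnn unfolding good_def by simp
qed

lemma transp_spr:
  assumes g: "good \<mu>" and inA: "a \<in> A" "p \<in> A" "q \<in> A"
    and dist: "a \<noteq> p" "a \<noteq> q" "p \<noteq> q"
    and eps: "0 \<le> \<epsilon>" "\<epsilon> \<le> \<mu> a" and ab: "0 \<le> \<alpha>" "0 \<le> \<beta>" "\<alpha> + \<beta> = \<epsilon>"
    and mean: "\<alpha> * pos p + \<beta> * pos q = \<epsilon> * pos a"
    and tr: "transp (spr \<mu> a p q \<epsilon> \<alpha> \<beta>) \<pi>'"
  shows "\<exists>\<pi>. transp \<mu> \<pi>"
proof -
  have nn: "\<forall>x\<in>A. 0 \<le> \<mu> x" using g unfolding good_def by auto
  show ?thesis
    using spread_glue[OF finA inA dist nn eps ab mean, of \<pi>' \<nu>] tr unfolding transp_def by blast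
qed

lemma G_ends:
  assumes g: "good \<mu>"
  shows "G \<mu> 0 = 0" "G \<mu> K = 0"
proof -
  have nn: "\<forall>x\<in>A. 0 \<le> \<mu> x" using g unfolding good_def by auto
  have C0: "C f (s 0) = (\<Sum>x\<in>A. f x * pos x) - s 0 * sum f A" for f
  proof -
    have "C f (s 0) = (\<Sum>x\<in>A. f x * pos x - s 0 * f x)"
      unfolding C_def by (rule sum.cong) (use pos_lo in \<open>auto simp: algebra_simps\<close>)
    then show ?thesis by (simp add: sum_subtractf sum_distrib_left)
  qed
  show "G \<mu> 0 = 0" unfolding G_def using C0[of \<mu>] C0[of \<nu>] g unfolding good_def by simp
  have CK: "C f (s K) = 0" for f
    unfolding C_def by (rule sum.neutral) (use pos_hi in \<open>auto\<close>)
  show "G \<mu> K = 0" unfolding G_def using CK by simp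
qed


lemma sum_grid:
  assumes "\<forall>x\<in>off. f x = 0"
  shows "sum f A = (\<Sum>i\<le>K. f (gp i))"
proof -
  have sub: "gp ` {..K} \<subseteq> A" using gp_in by auto
  have "sum f A = sum f (gp ` {..K})"
    by (rule sum.mono_neutral_right[OF finA sub]) (use assms in \<open>auto simp: off_def\<close>)
  also have "\<dots> = (\<Sum>i\<le>K. f (gp i))" by (rule sum.reindex_cong[OF gp_inj]) auto
  finally show ?thesis .
qed

lemma caseC:
  assumes g: "good \<mu>" and nooff: "\<forall>x\<in>off. \<not> 0 < \<mu> x" and noG: "\<forall>l\<le>K. \<not> 0 < G \<mu> l"
  shows "\<exists>\<pi>. transp \<mu> \<pi>"
proof -
  have nn: "\<forall>x\<in>A. 0 \<le> \<mu> x" using g unfolding good_def by auto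
  have off0: "\<forall>x\<in>off. \<mu> x = 0" using nooff nn unfolding off_def by force
  have noff0: "\<forall>x\<in>off. \<nu> x = 0" using nu_off unfolding off_def by auto
  have G0: "\<forall>l\<le>K. G \<mu> l = 0" using noG g unfolding good_def by force
  define D where "D i = \<mu> (gp i) - \<nu> (gp i)" for i
  have eqC: "(\<Sum>i\<le>K. D i * max 0 (s i - s l)) = 0" if "l \<le> K" for l
  proof -
    have "C \<mu> (s l) - C \<nu> (s l) = (\<Sum>x\<in>A. (\<mu> x - \<nu> x) * max 0 (pos x - s l))"
      unfolding C_def by (simp add: sum_subtractf algebra_simps)
    also have "\<dots> = (\<Sum>i\<le>K. (\<mu> (gp i) - \<nu> (gp i)) * max 0 (pos (gp i) - s l))"
      by (rule sum_grid) (use off0 noff0 in auto)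
    also have "\<dots> = (\<Sum>i\<le>K. D i * max 0 (s i - s l))"
      unfolding D_def by (rule sum.cong) (auto simp: pos_gp)
    finally show ?thesis using G0 that unfolding G_def by simp
  qed
  have eqS: "(\<Sum>i\<le>K. D i) = 0"
  proof -
    have "sum \<mu> A - sum \<nu> A = (\<Sum>x\<in>A. \<mu> x - \<nu> x)" by (simp add: sum_subtractf)
    also have "\<dots> = (\<Sum>i\<le>K. \<mu> (gp i) - \<nu> (gp i))" by (rule sum_grid) (use off0 noff0 in auto)
    finally show ?thesis using g unfolding good_def D_def by simp
  qed
  have D0: "\<forall>i\<le>K. D i = 0"
  proof (rule ccontr)
    assume "\<not> (\<forall>i\<le>K. D i = 0)"
    then have ne: "{i\<in>{..K}. D i \<noteq> 0} \<noteq> {}" by auto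
    define i0 where "i0 = Max {i\<in>{..K}. D i \<noteq> 0}"
    have i0in: "i0 \<in> {i\<in>{..K}. D i \<noteq> 0}" unfolding i0_def by (rule Max_in) (use ne in auto)
    have i0max: "\<And>i. i \<le> K \<Longrightarrow> D i \<noteq> 0 \<Longrightarrow> i \<le> i0" unfolding i0_def by (rule Max_ge) auto
    have split: "(\<Sum>i\<le>K. f i) = f i0 + (\<Sum>i\<in>{..K} - {i0}. f i)" for f :: "nat \<Rightarrow> real"
      using i0in by (simp add: sum.remove)
    show False
    proof (cases "i0 = 0")
      case True
      have "(\<Sum>i\<in>{..K} - {i0}. D i) = 0"
        by (rule sum.neutral) (use i0max True in force)
      then show False using eqS split[of D] i0in by simp
    next
      case False
      define l where "l = i0 - 1"
      have lK: "l \<le> K" "l < i0" using i0in False unfolding l_def by auto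
      have "(\<Sum>i\<in>{..K} - {i0}. D i * max 0 (s i - s l)) = 0"
      proof (rule sum.neutral, intro ballI)
        fix i assume i: "i \<in> {..K} - {i0}"
        show "D i * max 0 (s i - s l) = 0"
        proof (cases "i < i0")
          case True
          then have "i \<le> l" unfolding l_def by simp
          then have "s i \<le> s l" using smono_le lK by simp
          then show ?thesis by simp
        next
          case False
          then have "D i = 0" using i i0max by force
          then show ?thesis by simp
        qed
      qed
      then have "D i0 * max 0 (s i0 - s l) = 0" using eqC[OF lK(1)] split[of "\<lambda>i. D i * max 0 (s i - s l)"] by simp
      moreover have "s l < s i0" using smono lK i0in by auto
      ultimately show False using i0in by simp
    qed
  qed
  have eq: "\<forall>x\<in>A. \<mu> x = \<nu> x"
  proof
    fix x assume xA: "x \<in> A"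
    show "\<mu> x = \<nu> x"
    proof (cases "x \<in> off")
      case True then show ?thesis using off0 noff0 by simp
    next
      case False
      then obtain i where "i \<le> K" "x = gp i" using xA unfolding off_def by auto
      then show ?thesis using D0 unfolding D_def by auto
    qed
  qed
  define \<pi> where "\<pi> x y = (if x = y \<and> x \<in> A then \<mu> x else 0)" for x y
  have "transp \<mu> \<pi>"
    unfolding transp_def
  proof (intro conjI ballI allI)
    fix x y show "0 \<le> \<pi> x y" unfolding \<pi>_def using nn by auto
  next
    fix x assume x: "x \<in> A"
    have "sum (\<pi> x) A = (\<Sum>y\<in>A. if x = y then \<mu> x else 0)" unfolding \<pi>_def using x by simp
    also have "\<dots> = \<mu> x" using x finA by (simp add: sum.delta)
    finally show "sum (\<pi> x) A = \<mu> x" .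
    have "(\<Sum>y\<in>A. \<pi> x y * pos y) = (\<Sum>y\<in>A. if x = y then \<mu> x * pos x else 0)"
      unfolding \<pi>_def using x by (intro sum.cong) auto
    also have "\<dots> = \<mu> x * pos x" using x finA by (simp add: sum.delta)
    finally show "(\<Sum>y\<in>A. \<pi> x y * pos y) = \<mu> x * pos x" .
  next
    fix y assume y: "y \<in> A"
    have "(\<Sum>x\<in>A. \<pi> x y) = (\<Sum>x\<in>A. if x = y then \<mu> y else 0)" unfolding \<pi>_def using y by (intro sum.cong) auto
    also have "\<dots> = \<mu> y" using y finA by (simp add: sum.delta')
    finally show "(\<Sum>x\<in>A. \<pi> x y) = \<nu> y" using eq y by simp
  qed
  then show ?thesis by blast
qed


lemma N_less:
  fixes c1 c2 c3 d1 d2 d3 :: nat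
  assumes "c3 \<le> K + 1" "d3 \<le> K + 1" "c2 \<le> K + 1" "d2 \<le> K + 1"
    and "c1 < d1 \<or> (c1 = d1 \<and> c2 < d2) \<or> (c1 = d1 \<and> c2 = d2 \<and> c3 < d3) \<or> (c1 = d1 \<and> c2 \<le> d2 \<and> c3 < d3)"
  shows "c1 * (K+2)^2 + c2 * (K+2) + c3 < d1 * (K+2)^2 + d2 * (K+2) + d3"
proof -
  have b: "c2 * (K+2) + c3 < (K+2)^2"
  proof -
    have "c2 * (K+2) \<le> (K+1) * (K+2)" using mult_right_mono[OF assms(3), of "K+2"] by simp
    moreover have "(K+2)^2 = (K+1) * (K+2) + (K+2)" by (simp add: power2_eq_square algebra_simps)
    ultimately show ?thesis using assms(1) by linarith
  qed
  consider "c1 < d1" | "c1 = d1 \<and> c2 < d2" | "c1 = d1 \<and> c2 \<le> d2 \<and> c3 < d3" using assms(5) by force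
  then show ?thesis
  proof cases
    case 1
    then have "(c1 + 1) * (K+2)^2 \<le> d1 * (K+2)^2" by (intro mult_right_mono) auto
    then show ?thesis using b by (simp add: algebra_simps)
  next
    case 2
    then have "(c2 + 1) * (K+2) \<le> d2 * (K+2)" by (intro mult_right_mono) auto
    then show ?thesis using 2 assms(1) by (simp add: algebra_simps)
  next
    case 3
    then have "c2 * (K+2) \<le> d2 * (K+2)" by (intro mult_right_mono) auto
    then show ?thesis using 3 by simp
  qed
qed

lemma caseA:
  assumes g: "good \<mu>" and x: "x \<in> off" "0 < \<mu> x"
  shows "\<exists>\<mu>'. good \<mu>' \<and> N \<mu>' < N \<mu> \<and> ((\<exists>\<pi>. transp \<mu>' \<pi>) \<longrightarrow> (\<exists>\<pi>. transp \<mu> \<pi>))"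
proof -
  have xA: "x \<in> A" and xng: "x \<notin> gp ` {..K}" using x unfolding off_def by auto
  define k where "k = Max {i. i < K \<and> s i \<le> pos x}"
  have kfin: "finite {i. i < K \<and> s i \<le> pos x}" by simp
  have kne: "0 \<in> {i. i < K \<and> s i \<le> pos x}" using K1 pos_lo[OF xA] by simp
  have kin: "k < K" "s k \<le> pos x" using Max_in[OF kfin] kne unfolding k_def by blast+
  have kmax: "\<And>i. i < K \<Longrightarrow> s i \<le> pos x \<Longrightarrow> i \<le> k" unfolding k_def by (rule Max_ge[OF kfin]) auto
  have kup: "pos x \<le> s (Suc k)"
  proof (cases "Suc k < K")
    case True
    show ?thesis
    proof (rule ccontr)
      assume "\<not> pos x \<le> s (Suc k)"
      then have "Suc k \<le> k" using kmax[OF True] by simp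
      then show False by simp
    qed
  next
    case False
    then have "Suc k = K" using kin by simp
    then show ?thesis using pos_hi[OF xA] by simp
  qed
  define p where "p = gp k"
  define q where "q = gp (Suc k)"
  have pA: "p \<in> A" and qA: "q \<in> A" unfolding p_def q_def using gp_in kin by auto
  have posp: "pos p = s k" and posq: "pos q = s (Suc k)" unfolding p_def q_def using pos_gp kin by auto
  have dxp: "x \<noteq> p" and dxq: "x \<noteq> q" using xng kin unfolding p_def q_def by auto
  have dpq: "p \<noteq> q" unfolding p_def q_def using gp_inj kin by (auto dest: inj_onD)
  have dpos: "s k < s (Suc k)" using smono kin by auto
  define \<epsilon> where "\<epsilon> = \<mu> x"
  define d where "d = s (Suc k) - s k"
  have dpos': "0 < d" unfolding d_def using dpos by simp
  define \<alpha> where "\<alpha> = \<epsilon> * (s (Suc k) - pos x) / d"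
  define \<beta> where "\<beta> = \<epsilon> * (pos x - s k) / d"
  have epsnn: "0 \<le> \<epsilon>" unfolding \<epsilon>_def using x by simp
  have anb: "0 \<le> \<alpha>" "0 \<le> \<beta>" unfolding \<alpha>_def \<beta>_def using epsnn kup kin dpos' by auto
  have sab: "\<alpha> + \<beta> = \<epsilon>"
  proof -
    have "\<alpha> + \<beta> = \<epsilon> * ((s (Suc k) - pos x) + (pos x - s k)) / d"
      unfolding \<alpha>_def \<beta>_def by (simp add: add_divide_distrib[symmetric] ring_distribs)
    also have "\<dots> = \<epsilon> * d / d" unfolding d_def by simp
    also have "\<dots> = \<epsilon>" using dpos' by simp
    finally show ?thesis .
  qed
  have mab: "\<alpha> * pos p + \<beta> * pos q = \<epsilon> * pos x"
  proof -
    have "\<alpha> * pos p + \<beta> * pos q = \<epsilon> * ((s (Suc k) - pos x) * s k + (pos x - s k) * s (Suc k)) / d"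
      unfolding \<alpha>_def \<beta>_def posp posq by (simp add: add_divide_distrib[symmetric] ring_distribs)
    also have "\<dots> = (\<epsilon> * pos x) * d / d" unfolding d_def by (simp add: algebra_simps)
    also have "\<dots> = \<epsilon> * pos x" using dpos' by simp
    finally show ?thesis .
  qed
  define \<mu>' where "\<mu>' = spr \<mu> x p q \<epsilon> \<alpha> \<beta>"
  have Geq: "G \<mu>' l = G \<mu> l" if "l \<le> K" for l
  proof -
    have "\<alpha> * max 0 (pos p - s l) + \<beta> * max 0 (pos q - s l) - \<epsilon> * max 0 (pos x - s l) = 0"
    proof (cases "l \<le> k")
      case True
      then have "s l \<le> pos p" using posp smono_le kin by simp
      then show ?thesis using tent(2)[of "pos p" "pos x" "pos q" \<alpha> \<beta> \<epsilon> "s l"] posp posq kin kup anb sab mab by simp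
    next
      case False
      then have "pos q \<le> s l" using posq smono_le that by simp
      then show ?thesis using tent(3)[of "pos p" "pos x" "pos q" \<alpha> \<beta> \<epsilon> "s l"] posp posq kin kup anb sab mab by simp
    qed
    then show ?thesis unfolding \<mu>'_def using G_spr[OF xA pA qA] by simp
  qed
  have good': "good \<mu>'"
    unfolding \<mu>'_def
    by (rule good_spr[OF g xA pA qA _ anb sab mab dxp dxq]) (use Geq g \<epsilon>_def in \<open>auto simp: good_def \<mu>'_def\<close>)
  have muval: "\<mu>' y = \<mu> y" if "y \<noteq> x" "y \<noteq> p" "y \<noteq> q" for y
    using that unfolding \<mu>'_def spr_def by simp
  have mux0: "\<mu>' x = 0" unfolding \<mu>'_def spr_def \<epsilon>_def using dxp dxq by simp
  have pnoff: "p \<notin> off" "q \<notin> off" unfolding off_def p_def q_def using kin by auto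
  have set1: "{y\<in>off. 0 < \<mu>' y} = {y\<in>off. 0 < \<mu> y} - {x}"
  proof (intro set_eqI iffI)
    fix y assume "y \<in> {y\<in>off. 0 < \<mu>' y}"
    then have y: "y \<in> off" "0 < \<mu>' y" by auto
    then have "y \<noteq> x" "y \<noteq> p" "y \<noteq> q" using mux0 pnoff by auto
    then show "y \<in> {y\<in>off. 0 < \<mu> y} - {x}" using y muval by auto
  next
    fix y assume "y \<in> {y\<in>off. 0 < \<mu> y} - {x}"
    then have y: "y \<in> off" "0 < \<mu> y" "y \<noteq> x" by auto
    then have "y \<noteq> p" "y \<noteq> q" using pnoff by auto
    then show "y \<in> {y\<in>off. 0 < \<mu>' y}" using y muval by auto
  qed
  have c1: "card {y\<in>off. 0 < \<mu>' y} < card {y\<in>off. 0 < \<mu> y}"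
    unfolding set1 by (rule card_Diff1_less) (use finoff x in auto)
  have set2: "{l\<in>{..K}. 0 < G \<mu>' l} = {l\<in>{..K}. 0 < G \<mu> l}" using Geq by auto
  have "N \<mu>' < N \<mu>"
    unfolding N_def set2 by (rule N_less) (use c1 card_le_K in auto)
  moreover have "(\<exists>\<pi>. transp \<mu>' \<pi>) \<longrightarrow> (\<exists>\<pi>. transp \<mu> \<pi>)"
    using transp_spr[OF g xA pA qA dxp dxq dpq epsnn _ anb sab mab] unfolding \<mu>'_def \<epsilon>_def by auto
  ultimately show ?thesis using good' by blast
qed

lemma caseB:
  assumes g: "good \<mu>" and nooff: "\<forall>x\<in>off. \<not> 0 < \<mu> x" and l0: "l0 \<le> K" "0 < G \<mu> l0"
  shows "\<exists>\<mu>'. good \<mu>' \<and> N \<mu>' < N \<mu> \<and> ((\<exists>\<pi>. transp \<mu>' \<pi>) \<longrightarrow> (\<exists>\<pi>. transp \<mu> \<pi>))"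
proof -
  have nn: "\<forall>x\<in>A. 0 \<le> \<mu> x" using g unfolding good_def by auto
  have off0: "\<forall>x\<in>off. \<mu> x = 0" using nooff nn unfolding off_def by force
  have Gnn: "\<And>l. l \<le> K \<Longrightarrow> 0 \<le> G \<mu> l" using g unfolding good_def by auto
  have l0pos: "0 < l0" "l0 < K"
    using G_ends[OF g] l0 by (auto intro!: Nat.gr0I simp: order.order_iff_strict)
  define P where "P = {i. i < l0 \<and> G \<mu> i = 0}"
  have Pfin: "finite P" unfolding P_def by simp
  have P0: "0 \<in> P" unfolding P_def using l0pos G_ends[OF g] by simp
  define p where "p = Max P"
  have pP: "p \<in> P" unfolding p_def using Max_in[OF Pfin] P0 by blast
  have pl: "p < l0" "G \<mu> p = 0" using pP unfolding P_def by auto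
  have pmax: "\<And>i. i < l0 \<Longrightarrow> G \<mu> i = 0 \<Longrightarrow> i \<le> p" unfolding p_def by (rule Max_ge[OF Pfin]) (simp add: P_def)
  define Q where "Q = {i. l0 < i \<and> i \<le> K \<and> G \<mu> i = 0}"
  have Qfin: "finite Q" unfolding Q_def by simp
  have QK: "K \<in> Q" unfolding Q_def using l0pos G_ends[OF g] by simp
  define q where "q = Min Q"
  have qQ: "q \<in> Q" unfolding q_def using Min_in[OF Qfin] QK by blast
  have ql: "l0 < q" "q \<le> K" "G \<mu> q = 0" using qQ unfolding Q_def by auto
  have qmin: "\<And>i. l0 < i \<Longrightarrow> i \<le> K \<Longrightarrow> G \<mu> i = 0 \<Longrightarrow> q \<le> i" unfolding q_def by (rule Min_le[OF Qfin]) (simp add: Q_def)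
  have run: "0 < G \<mu> i" if "p < i" "i < q" for i
  proof -
    have iK: "i \<le> K" using that ql by simp
    have "G \<mu> i \<noteq> 0"
    proof
      assume z: "G \<mu> i = 0"
      consider "i < l0" | "i = l0" | "l0 < i" by linarith
      then show False
      proof cases
        case 1 then show False using pmax[OF 1 z] that by simp
      next
        case 2 then show False using z l0 by simp
      next
        case 3 then show False using qmin[OF 3 iK z] that by simp
      qed
    qed
    then show ?thesis using Gnn[OF iK] by simp
  qed
  have pq: "p < q" using pl ql by simp
  have spq: "s p < s q" using smono pq ql by simp
  have exk: "\<exists>k. p < k \<and> k < q \<and> 0 < \<mu> (gp k)"
  proof (rule ccontr)
    assume nk: "\<not> (\<exists>k. p < k \<and> k < q \<and> 0 < \<mu> (gp k))"
    have sep: "\<mu> z = 0 \<or> pos z \<le> s p \<or> s q \<le> pos z" if zA: "z \<in> A" for z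
    proof (cases "z \<in> off")
      case True then show ?thesis using off0 by simp
    next
      case False
      then obtain i where i: "i \<le> K" "z = gp i" using zA unfolding off_def by auto
      have pz: "pos z = s i" using i pos_gp by simp
      consider "i \<le> p" | "p < i \<and> i < q" | "q \<le> i" by linarith
      then show ?thesis
      proof cases
        case 1 then show ?thesis using pz smono_le pl ql by auto
      next
        case 2 then have "\<mu> z = 0" using nk nn zA i by force
        then show ?thesis by simp
      next
        case 3 then show ?thesis using pz smono_le i by auto
      qed
    qed
    define lam where "lam = (s q - s l0) / (s q - s p)"
    have sl0: "s p < s l0" "s l0 < s q" using smono pl ql l0 by auto
    have lam01: "0 \<le> lam" "lam \<le> 1" unfolding lam_def using sl0 spq by (auto simp: field_simps)
    have lamc: "s l0 = lam * s p + (1 - lam) * s q"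
    proof -
      have d0: "s q - s p \<noteq> 0" using spq by simp
      have l1: "1 - lam = (s l0 - s p) / (s q - s p)" unfolding lam_def using d0 by (simp add: field_simps)
      have "lam * s p + (1 - lam) * s q = ((s q - s l0) * s p + (s l0 - s p) * s q) / (s q - s p)"
        unfolding l1 unfolding lam_def by (simp add: add_divide_distrib[symmetric])
      also have "\<dots> = s l0 * (s q - s p) / (s q - s p)" by (simp add: algebra_simps)
      also have "\<dots> = s l0" using d0 by simp
      finally show ?thesis by simp
    qed
    have Cmu: "C \<mu> (s l0) = lam * C \<mu> (s p) + (1 - lam) * C \<mu> (s q)"
    proof -
      have "C \<mu> (s l0) = (\<Sum>z\<in>A. lam * (\<mu> z * max 0 (pos z - s p)) + (1 - lam) * (\<mu> z * max 0 (pos z - s q)))"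
        unfolding C_def
      proof (rule sum.cong[OF refl])
        fix z assume zA: "z \<in> A"
        show "\<mu> z * max 0 (pos z - s l0) = lam * (\<mu> z * max 0 (pos z - s p)) + (1 - lam) * (\<mu> z * max 0 (pos z - s q))"
        proof (cases "\<mu> z = 0")
          case True then show ?thesis by simp
        next
          case False
          then have "pos z \<le> s p \<or> s q \<le> pos z" using sep[OF zA] by simp
          then have h: "max 0 (pos z - s l0) = lam * max 0 (pos z - s p) + (1 - lam) * max 0 (pos z - s q)"
            using maxconv(2)[OF lam01 lamc] spq by simp
          show ?thesis unfolding h by (simp add: algebra_simps)
        qed
      qed
      then show ?thesis unfolding C_def by (simp add: sum.distrib sum_distrib_left)
    qed
    have Cnu: "C \<nu> (s l0) \<le> lam * C \<nu> (s p) + (1 - lam) * C \<nu> (s q)"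
    proof -
      have "C \<nu> (s l0) \<le> (\<Sum>z\<in>A. lam * (\<nu> z * max 0 (pos z - s p)) + (1 - lam) * (\<nu> z * max 0 (pos z - s q)))"
        unfolding C_def
      proof (rule sum_mono)
        fix z assume zA: "z \<in> A"
        have "max 0 (pos z - s l0) \<le> lam * max 0 (pos z - s p) + (1 - lam) * max 0 (pos z - s q)"
          using maxconv(1)[OF lam01 lamc] spq by simp
        then have "\<nu> z * max 0 (pos z - s l0) \<le> \<nu> z * (lam * max 0 (pos z - s p) + (1 - lam) * max 0 (pos z - s q))"
          using nu_nn[OF zA] by (rule mult_left_mono)
        then show "\<nu> z * max 0 (pos z - s l0) \<le> lam * (\<nu> z * max 0 (pos z - s p)) + (1 - lam) * (\<nu> z * max 0 (pos z - s q))"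
          by (simp add: algebra_simps)
      qed
      then show ?thesis unfolding C_def by (simp add: sum.distrib sum_distrib_left)
    qed
    have "G \<mu> l0 \<le> lam * G \<mu> p + (1 - lam) * G \<mu> q"
      unfolding G_def using Cmu Cnu by (simp add: algebra_simps)
    then show False using pl ql l0 by simp
  qed
  then obtain k where k: "p < k" "k < q" "0 < \<mu> (gp k)" by blast
  have kK: "k \<le> K" "p \<le> K" using k ql by auto
  define a where "a = gp k"
  define p' where "p' = gp p"
  define q' where "q' = gp q"
  have inA: "a \<in> A" "p' \<in> A" "q' \<in> A" unfolding a_def p'_def q'_def using gp_in kK ql by auto
  have poss: "pos a = s k" "pos p' = s p" "pos q' = s q" unfolding a_def p'_def q'_def using pos_gp kK ql by auto
  have injd: "gp i \<noteq> gp j" if "i \<noteq> j" "i \<le> K" "j \<le> K" for i j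
    using gp_inj that by (auto dest: inj_onD)
  have dist: "a \<noteq> p'" "a \<noteq> q'" "p' \<noteq> q'" unfolding a_def p'_def q'_def using injd k kK ql by auto
  have sk: "s p < s k" "s k < s q" using smono k kK ql by auto
  define \<alpha>1 where "\<alpha>1 = (s q - s k) / (s q - s p)"
  define \<beta>1 where "\<beta>1 = (s k - s p) / (s q - s p)"
  have ab1: "0 < \<alpha>1" "0 < \<beta>1" unfolding \<alpha>1_def \<beta>1_def using sk by auto
  have sab1: "\<alpha>1 + \<beta>1 = 1" unfolding \<alpha>1_def \<beta>1_def using spq by (simp add: add_divide_distrib[symmetric])
  have mab1: "\<alpha>1 * s p + \<beta>1 * s q = 1 * s k"
  proof -
    have "\<alpha>1 * s p + \<beta>1 * s q = ((s q - s k) * s p + (s k - s p) * s q) / (s q - s p)"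
      unfolding \<alpha>1_def \<beta>1_def by (simp add: add_divide_distrib[symmetric])
    also have "\<dots> = s k * (s q - s p) / (s q - s p)" by (simp add: algebra_simps)
    also have "\<dots> = 1 * s k" using spq by simp
    finally show ?thesis .
  qed
  define \<tau> where "\<tau> l = \<alpha>1 * max 0 (s p - s l) + \<beta>1 * max 0 (s q - s l) - 1 * max 0 (s k - s l)" for l
  have tnn: "0 \<le> \<tau> l" for l
    unfolding \<tau>_def by (rule tent(1)) (use sk ab1 sab1 mab1 in auto)
  have tlo: "\<tau> l = 0" if "l \<le> p" for l
  proof -
    have "s l \<le> s p" using smono_le that kK by simp
    then show ?thesis unfolding \<tau>_def by (intro tent(2)) (use sk ab1 sab1 mab1 in auto)
  qed
  have thi: "\<tau> l = 0" if "q \<le> l" "l \<le> K" for l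
  proof -
    have "s q \<le> s l" using smono_le that by simp
    then show ?thesis unfolding \<tau>_def by (intro tent(3)) (use sk ab1 sab1 mab1 in auto)
  qed
  have tpos: "0 < \<tau> l" if "p < l" "l < q" for l
  proof -
    have "s p < s l" "s l < s q" using smono that ql by auto
    then show ?thesis unfolding \<tau>_def by (intro tent(4)) (use sk ab1 sab1 mab1 in auto)
  qed
  define S where "S = {p<..<q}"
  have Sfin: "finite S" and Sne: "S \<noteq> {}" unfolding S_def using k by auto
  define m where "m = Min ((\<lambda>l. G \<mu> l / \<tau> l) ` S)"
  have mle: "m \<le> G \<mu> l / \<tau> l" if "l \<in> S" for l
    unfolding m_def using Sfin that by (intro Min_le) auto
  have min: "m \<in> (\<lambda>l. G \<mu> l / \<tau> l) ` S" unfolding m_def using Sfin Sne by (intro Min_in) auto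
  have mnn: "0 \<le> m"
  proof -
    obtain l where "l \<in> S" "m = G \<mu> l / \<tau> l" using min by auto
    moreover then have "0 < G \<mu> l" "0 < \<tau> l" using run tpos unfolding S_def by auto
    ultimately show ?thesis by simp
  qed
  define \<epsilon> where "\<epsilon> = min (\<mu> a) m"
  have epsnn: "0 \<le> \<epsilon>" "\<epsilon> \<le> \<mu> a" unfolding \<epsilon>_def a_def using k mnn by auto
  define \<alpha> where "\<alpha> = \<epsilon> * \<alpha>1"
  define \<beta> where "\<beta> = \<epsilon> * \<beta>1"
  have ab: "0 \<le> \<alpha>" "0 \<le> \<beta>" unfolding \<alpha>_def \<beta>_def using epsnn ab1 by auto
  have sab: "\<alpha> + \<beta> = \<epsilon>" unfolding \<alpha>_def \<beta>_def using sab1 by (simp add: ring_distribs[symmetric])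
  have mab: "\<alpha> * pos p' + \<beta> * pos q' = \<epsilon> * pos a"
  proof -
    have "\<alpha> * pos p' + \<beta> * pos q' = \<epsilon> * (\<alpha>1 * s p + \<beta>1 * s q)" unfolding \<alpha>_def \<beta>_def poss by (simp add: algebra_simps)
    then show ?thesis using mab1 poss by simp
  qed
  define \<mu>' where "\<mu>' = spr \<mu> a p' q' \<epsilon> \<alpha> \<beta>"
  have Gmu': "G \<mu>' l = G \<mu> l - \<epsilon> * \<tau> l" for l
  proof -
    have "\<alpha> * max 0 (pos p' - s l) + \<beta> * max 0 (pos q' - s l) - \<epsilon> * max 0 (pos a - s l) = \<epsilon> * \<tau> l"
      unfolding \<alpha>_def \<beta>_def \<tau>_def poss by (simp add: algebra_simps)
    then show ?thesis unfolding \<mu>'_def using G_spr[OF inA] by simp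
  qed
  have Gle: "G \<mu>' l \<le> G \<mu> l" for l using Gmu' tnn epsnn by simp
  have G'nn: "\<forall>l\<le>K. 0 \<le> G \<mu>' l"
  proof (intro allI impI)
    fix l assume lK: "l \<le> K"
    show "0 \<le> G \<mu>' l"
    proof (cases "l \<in> S")
      case True
      have "\<epsilon> \<le> G \<mu> l / \<tau> l" using mle[OF True] unfolding \<epsilon>_def by simp
      moreover have "0 < \<tau> l" using tpos True unfolding S_def by auto
      ultimately have "\<epsilon> * \<tau> l \<le> G \<mu> l" by (simp add: pos_le_divide_eq)
      then show ?thesis using Gmu' by simp
    next
      case False
      then have "l \<le> p \<or> q \<le> l" unfolding S_def by auto
      then have "\<tau> l = 0" using tlo thi lK by auto
      then show ?thesis using Gmu' Gnn[OF lK] by simp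
    qed
  qed
  have good': "good \<mu>'" unfolding \<mu>'_def
    by (rule good_spr[OF g inA epsnn(2) ab sab mab dist(1,2)]) (use G'nn in \<open>simp add: \<mu>'_def\<close>)
  have muval: "\<mu>' y = \<mu> y" if "y \<noteq> a" "y \<noteq> p'" "y \<noteq> q'" for y
    using that unfolding \<mu>'_def spr_def by simp
  have gridnoff: "gp i \<notin> off" if "i \<le> K" for i unfolding off_def using that by auto
  have set1: "{y\<in>off. 0 < \<mu>' y} = {y\<in>off. 0 < \<mu> y}"
  proof -
    have "a \<notin> off" "p' \<notin> off" "q' \<notin> off" unfolding a_def p'_def q'_def using gridnoff kK ql by auto
    then have "y \<in> off \<Longrightarrow> \<mu>' y = \<mu> y" for y using muval by metis
    then show ?thesis by auto
  qed
  have set2sub: "{l\<in>{..K}. 0 < G \<mu>' l} \<subseteq> {l\<in>{..K}. 0 < G \<mu> l}" using Gle by (auto intro: less_le_trans)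
  have cN: "N \<mu>' < N \<mu>"
  proof (cases "\<epsilon> = \<mu> a")
    case True
    have mua0: "\<mu>' a = 0" unfolding \<mu>'_def spr_def using dist True by simp
    have Gp0: "G \<mu>' p = 0" "G \<mu>' q = 0" using Gmu' tlo thi pl ql by auto
    have sub3: "{l\<in>{..K}. 0 < \<mu>' (gp l) \<and> 0 < G \<mu>' l} \<subseteq> {l\<in>{..K}. 0 < \<mu> (gp l) \<and> 0 < G \<mu> l} - {k}"
    proof
      fix l assume "l \<in> {l\<in>{..K}. 0 < \<mu>' (gp l) \<and> 0 < G \<mu>' l}"
      then have l: "l \<le> K" "0 < \<mu>' (gp l)" "0 < G \<mu>' l" by auto
      have lk: "l \<noteq> k" using l mua0 unfolding a_def by auto
      have lp: "l \<noteq> p" "l \<noteq> q" using l Gp0 by auto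
      have "gp l \<noteq> a" "gp l \<noteq> p'" "gp l \<noteq> q'" unfolding a_def p'_def q'_def using injd lk lp l kK ql by auto
      then have "\<mu>' (gp l) = \<mu> (gp l)" using muval by simp
      then show "l \<in> {l\<in>{..K}. 0 < \<mu> (gp l) \<and> 0 < G \<mu> l} - {k}" using l lk Gle[of l] by auto
    qed
    have kin3: "k \<in> {l\<in>{..K}. 0 < \<mu> (gp l) \<and> 0 < G \<mu> l}" using k kK run by auto
    have c3: "card {l\<in>{..K}. 0 < \<mu>' (gp l) \<and> 0 < G \<mu>' l} < card {l\<in>{..K}. 0 < \<mu> (gp l) \<and> 0 < G \<mu> l}"
    proof -
      have "card {l\<in>{..K}. 0 < \<mu>' (gp l) \<and> 0 < G \<mu>' l} \<le> card ({l\<in>{..K}. 0 < \<mu> (gp l) \<and> 0 < G \<mu> l} - {k})"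
        by (rule card_mono[OF _ sub3]) simp
      also have "\<dots> < card {l\<in>{..K}. 0 < \<mu> (gp l) \<and> 0 < G \<mu> l}"
        by (rule card_Diff1_less[OF _ kin3]) simp
      finally show ?thesis .
    qed
    have c2: "card {l\<in>{..K}. 0 < G \<mu>' l} \<le> card {l\<in>{..K}. 0 < G \<mu> l}" by (rule card_mono[OF _ set2sub]) simp
    show ?thesis unfolding N_def set1 by (rule N_less) (use c2 c3 card_le_K in auto)
  next
    case False
    then have em: "\<epsilon> = m" unfolding \<epsilon>_def by auto
    obtain l1 where l1: "l1 \<in> S" "m = G \<mu> l1 / \<tau> l1" using min by auto
    have l1p: "0 < G \<mu> l1" "0 < \<tau> l1" "l1 \<le> K" using run tpos l1 ql unfolding S_def by auto
    have "G \<mu>' l1 = 0" using Gmu' em l1 l1p by simp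
    then have "l1 \<notin> {l\<in>{..K}. 0 < G \<mu>' l}" by simp
    moreover have "l1 \<in> {l\<in>{..K}. 0 < G \<mu> l}" using l1p by simp
    ultimately have "{l\<in>{..K}. 0 < G \<mu>' l} \<subset> {l\<in>{..K}. 0 < G \<mu> l}" using set2sub by blast
    then have c2: "card {l\<in>{..K}. 0 < G \<mu>' l} < card {l\<in>{..K}. 0 < G \<mu> l}" by (rule psubset_card_mono[rotated]) simp
    show ?thesis unfolding N_def set1 by (rule N_less) (use c2 card_le_K in auto)
  qed
  have "(\<exists>\<pi>. transp \<mu>' \<pi>) \<longrightarrow> (\<exists>\<pi>. transp \<mu> \<pi>)"
    using transp_spr[OF g inA dist epsnn ab sab mab] unfolding \<mu>'_def by auto
  then show ?thesis using good' cN by blast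
qed

theorem strassen:
  assumes "good \<mu>"
  shows "\<exists>\<pi>. transp \<mu> \<pi>"
  using assms
proof (induction \<mu> rule: measure_induct_rule[of N])
  case (less \<mu>)
  show ?case
  proof (cases "\<exists>x\<in>off. 0 < \<mu> x")
    case True
    then obtain x where "x \<in> off" "0 < \<mu> x" by blast
    then show ?thesis using caseA[OF less.prems] less.IH by blast
  next
    case F: False
    show ?thesis
    proof (cases "\<exists>l\<le>K. 0 < G \<mu> l")
      case True
      then obtain l where "l \<le> K" "0 < G \<mu> l" by blast
      then show ?thesis using caseB[OF less.prems] F less.IH by blast
    next
      case False
      then show ?thesis using caseC[OF less.prems] F by blast
    qed
  qed
qed

end

lemma sum_split_at:
  fixes f :: "nat \<Rightarrow> real"
  assumes "l \<le> K"
  shows "(\<Sum>i\<le>K. f i) = (\<Sum>i\<le>l. f i) + (\<Sum>i\<in>{l<..K}. f i)"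
proof -
  have "{..K} = {..l} \<union> {l<..K}" using assms by auto
  moreover have "{..l} \<inter> {l<..K} = {}" by auto
  ultimately show ?thesis by (simp add: sum.union_disjoint)
qed

lemma div_le_div_cross:
  fixes a b c d :: real
  assumes "0 < b" "0 < d" "a * d \<le> c * b"
  shows "a / b \<le> c / d"
proof -
  have "a / b = (a * d) / (b * d)" using assms by simp
  also have "\<dots> \<le> (c * b) / (b * d)" using assms by (intro divide_right_mono) auto
  also have "\<dots> = c / d" using assms by simp
  finally show ?thesis .
qed

lemma grid_measure:
  fixes s D :: "nat \<Rightarrow> real" and K :: nat and M :: real
  assumes K1: "1 \<le> K" and smono: "\<And>i j. i < j \<Longrightarrow> j \<le> K \<Longrightarrow> s i < s j"
    and conv: "\<And>i. 0 < i \<Longrightarrow> i < K \<Longrightarrow>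
        D i * (s (Suc i) - s (i - 1)) \<le> D (i - 1) * (s (Suc i) - s i) + D (Suc i) * (s i - s (i - 1))"
    and DK: "D K = 0" and DK1: "0 \<le> D (K - 1)"
    and M0: "(D 0 - D 1) / (s 1 - s 0) \<le> M"
  shows "\<exists>\<nu>. (\<forall>i\<le>K. 0 \<le> \<nu> i) \<and> (\<Sum>i\<le>K. \<nu> i) = M \<and> (\<forall>l\<le>K. (\<Sum>i\<le>K. \<nu> i * max 0 (s i - s l)) = D l)"
proof -
  define sl where "sl i = (if i < K then (D (Suc i) - D i) / (s (Suc i) - s i) else 0)" for i
  define \<nu> where "\<nu> i = (if i = 0 then M + sl 0 else sl i - sl (i - 1))" for i
  have slmono: "sl (i - 1) \<le> sl i" if "0 < i" "i < K" for i
  proof -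
    have i1: "i - 1 < K" "Suc (i - 1) = i" using that by auto
    have d1: "0 < s i - s (i - 1)" using smono[of "i - 1" i] that by auto
    have d2: "0 < s (Suc i) - s i" using smono[of i "Suc i"] that by auto
    have c: "D i * ((s (Suc i) - s i) + (s i - s (i - 1))) \<le> D (i - 1) * (s (Suc i) - s i) + D (Suc i) * (s i - s (i - 1))"
      using conv[OF that] by simp
    then have "(D i - D (i - 1)) * (s (Suc i) - s i) \<le> (D (Suc i) - D i) * (s i - s (i - 1))"
      by (simp add: algebra_simps)
    then have "(D i - D (i - 1)) / (s i - s (i - 1)) \<le> (D (Suc i) - D i) / (s (Suc i) - s i)"
      using d1 d2 by (intro div_le_div_cross) auto
    then show ?thesis unfolding sl_def using i1 that by simp
  qed
  have nn: "\<forall>i\<le>K. 0 \<le> \<nu> i"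
  proof (intro allI impI)
    fix i assume iK: "i \<le> K"
    show "0 \<le> \<nu> i"
    proof (cases "i = 0")
      case True
      have "sl 0 = (D 1 - D 0) / (s 1 - s 0)" unfolding sl_def using K1 by simp
      also have "\<dots> = - ((D 0 - D 1) / (s 1 - s 0))" by (simp add: minus_divide_left)
      finally show ?thesis unfolding \<nu>_def using True M0 by simp
    next
      case False
      show ?thesis
      proof (cases "i = K")
        case True
        have "sl (K - 1) = (D K - D (K - 1)) / (s K - s (K - 1))" unfolding sl_def using K1 by simp
        moreover have "0 < s K - s (K - 1)" using smono[of "K - 1" K] K1 by simp
        ultimately have "sl (K - 1) \<le> 0" using DK DK1 by (simp add: divide_nonpos_pos)
        moreover have "sl K = 0" unfolding sl_def by simp
        ultimately show ?thesis unfolding \<nu>_def using True False by simp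
      next
        case F2: False
        then show ?thesis unfolding \<nu>_def using slmono[of i] False iK by simp
      qed
    qed
  qed
  have tail: "\<forall>l. l + k = K \<longrightarrow> (\<Sum>i\<in>{l<..K}. \<nu> i) = - sl l" for k
  proof (induction k)
    case 0
    then show ?case unfolding sl_def by simp
  next
    case (Suc k)
    show ?case
    proof (intro allI impI)
      fix l assume lk: "l + Suc k = K"
      have "{l<..K} = insert (Suc l) {Suc l<..K}" using lk by auto
      then have "(\<Sum>i\<in>{l<..K}. \<nu> i) = \<nu> (Suc l) + (\<Sum>i\<in>{Suc l<..K}. \<nu> i)" by simp
      also have "\<dots> = \<nu> (Suc l) - sl (Suc l)" using Suc.IH lk by simp
      also have "\<dots> = - sl l" unfolding \<nu>_def by simp
      finally show "(\<Sum>i\<in>{l<..K}. \<nu> i) = - sl l" .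
    qed
  qed
  have tailK: "(\<Sum>i\<in>{l<..K}. \<nu> i) = - sl l" if "l \<le> K" for l
    using tail[of "K - l"] that by simp
  have tot: "(\<Sum>i\<le>K. \<nu> i) = M"
  proof -
    have "(\<Sum>i\<le>K. \<nu> i) = (\<Sum>i\<le>0. \<nu> i) + (\<Sum>i\<in>{0<..K}. \<nu> i)" by (rule sum_split_at) simp
    also have "\<dots> = \<nu> 0 - sl 0" using tailK[of 0] by simp
    also have "\<dots> = M" unfolding \<nu>_def by simp
    finally show ?thesis .
  qed
  have CL: "\<forall>l. l + k = K \<longrightarrow> (\<Sum>i\<le>K. \<nu> i * max 0 (s i - s l)) = D l" for k
  proof (induction k)
    case 0
    show ?case
    proof (intro allI impI)
      fix l assume "l + 0 = K"
      then have lK: "l = K" by simp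
      have "(\<Sum>i\<le>K. \<nu> i * max 0 (s i - s l)) = 0"
      proof (rule sum.neutral, intro ballI)
        fix i assume "i \<in> {..K}"
        then have "s i \<le> s K" using smono[of i K] by (cases "i = K") auto
        then show "\<nu> i * max 0 (s i - s l) = 0" using lK by simp
      qed
      then show "(\<Sum>i\<le>K. \<nu> i * max 0 (s i - s l)) = D l" using lK DK by simp
    qed
  next
    case (Suc k)
    show ?case
    proof (intro allI impI)
      fix l assume lk: "l + Suc k = K"
      have lK: "l < K" using lk by simp
      have IH: "(\<Sum>i\<le>K. \<nu> i * max 0 (s i - s (Suc l))) = D (Suc l)" using Suc.IH lk by simp
      have slp: "0 < s (Suc l) - s l" using smono[of l "Suc l"] lK by simp
      have diff: "(\<Sum>i\<le>K. \<nu> i * max 0 (s i - s l)) - (\<Sum>i\<le>K. \<nu> i * max 0 (s i - s (Suc l)))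
          = (\<Sum>i\<le>K. (if l < i then \<nu> i * (s (Suc l) - s l) else 0))"
      proof -
        have "(\<Sum>i\<le>K. \<nu> i * max 0 (s i - s l)) - (\<Sum>i\<le>K. \<nu> i * max 0 (s i - s (Suc l)))
          = (\<Sum>i\<le>K. \<nu> i * max 0 (s i - s l) - \<nu> i * max 0 (s i - s (Suc l)))" by (simp add: sum_subtractf)
        also have "\<dots> = (\<Sum>i\<le>K. (if l < i then \<nu> i * (s (Suc l) - s l) else 0))"
        proof (rule sum.cong[OF refl])
          fix i assume iK: "i \<in> {..K}"
          show "\<nu> i * max 0 (s i - s l) - \<nu> i * max 0 (s i - s (Suc l)) = (if l < i then \<nu> i * (s (Suc l) - s l) else 0)"
          proof (cases "l < i")
            case True
            then have "s (Suc l) \<le> s i" using smono[of "Suc l" i] iK by (cases "Suc l = i") auto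
            then have "max 0 (s i - s l) = s i - s l" "max 0 (s i - s (Suc l)) = s i - s (Suc l)" using slp by auto
            then show ?thesis using True by (simp add: algebra_simps)
          next
            case False
            then have "s i \<le> s l" using smono[of i l] lK by (cases "i = l") auto
            then have "max 0 (s i - s l) = 0" "max 0 (s i - s (Suc l)) = 0" using slp by auto
            then show ?thesis using False by simp
          qed
        qed
        finally show ?thesis .
      qed
      also have "\<dots> = (\<Sum>i\<in>{l<..K}. \<nu> i * (s (Suc l) - s l))"
      proof -
        have "(\<Sum>i\<le>K. (if l < i then \<nu> i * (s (Suc l) - s l) else 0)) =
            (\<Sum>i\<le>l. (if l < i then \<nu> i * (s (Suc l) - s l) else 0)) + (\<Sum>i\<in>{l<..K}. (if l < i then \<nu> i * (s (Suc l) - s l) else 0))"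
          using sum_split_at[of l K] lK by simp
        also have "\<dots> = (\<Sum>i\<in>{l<..K}. \<nu> i * (s (Suc l) - s l))" by simp
        finally show ?thesis .
      qed
      also have "\<dots> = - sl l * (s (Suc l) - s l)" using tailK[of l] lK by (simp add: sum_distrib_right[symmetric])
      also have "\<dots> = - (D (Suc l) - D l)" unfolding sl_def using lK slp by simp
      finally show "(\<Sum>i\<le>K. \<nu> i * max 0 (s i - s l)) = D l" using IH by simp
    qed
  qed
  have "\<forall>l\<le>K. (\<Sum>i\<le>K. \<nu> i * max 0 (s i - s l)) = D l"
  proof (intro allI impI)
    fix l assume "l \<le> K"
    then show "(\<Sum>i\<le>K. \<nu> i * max 0 (s i - s l)) = D l" using CL[of "K - l"] by simp
  qed
  then show ?thesis using nn tot by blast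
qed

locale dprob =
  fixes n :: nat and u :: "nat \<Rightarrow> nat \<Rightarrow> real"
  assumes n1: "1 \<le> n"
    and incr1: "\<forall>i\<in>{1..<n}. u 1 i < u 1 (Suc i)"
    and decr2: "\<forall>i\<in>{1..<n}. u 2 i > u 2 (Suc i)"
    and zero1: "u 1 1 = 0 \<and> u 2 1 = 0"
    and undom: "\<forall>i\<in>{1..n}. \<not> (\<exists>\<alpha>. prob_on ({1..n} - {i}) \<alpha> \<and>
                    (\<forall>th\<in>{1,2}. u th i \<le> mixed_util ({1..n} - {i}) u th \<alpha>))"
begin

definition d :: "nat \<Rightarrow> nat \<Rightarrow> real" where "d l th = u th (Suc l) - u th l"
definition xx :: "nat \<Rightarrow> real" where "xx l = d l 1"
definition yy :: "nat \<Rightarrow> real" where "yy l = - d l 2"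
definition tt :: "nat \<Rightarrow> real" where "tt l = yy l / xx l"
definition cc :: "nat \<Rightarrow> real" where "cc l = yy l / (xx l + yy l)"
definition sg :: "nat \<Rightarrow> real" where "sg i = (if i = 0 then 0 else if i < n then cc i else 1)"

lemma xy_pos: "1 \<le> l \<Longrightarrow> l < n \<Longrightarrow> 0 < xx l \<and> 0 < yy l"
  using incr1 decr2 unfolding xx_def yy_def d_def by auto

lemma u_tel: "1 \<le> a \<Longrightarrow> (th = 1 \<or> th = 2) \<Longrightarrow> u th a = (\<Sum>l\<in>{1..<a}. d l th)"
proof (induction a rule: dec_induct)
  case base
  then show ?case using zero1 by auto
next
  case (step a)
  have "{1..<Suc a} = insert a {1..<a}" using step.hyps by auto
  then have "(\<Sum>l\<in>{1..<Suc a}. d l th) = d a th + (\<Sum>l\<in>{1..<a}. d l th)" by simp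
  then show ?case using step by (simp add: d_def)
qed

lemma thr_mono:
  assumes l: "1 \<le> l" "Suc l < n"
  shows "yy l * xx (Suc l) < yy (Suc l) * xx l"
proof (rule ccontr)
  assume neg: "\<not> yy l * xx (Suc l) < yy (Suc l) * xx l"
  have p1: "0 < xx l" "0 < yy l" using xy_pos l by auto
  have p2: "0 < xx (Suc l)" "0 < yy (Suc l)" using xy_pos[of "Suc l"] l by auto
  define X where "X = xx l + xx (Suc l)"
  have Xp: "0 < X" unfolding X_def using p1 p2 by simp
  define \<alpha> where "\<alpha> a = (if a = l then xx (Suc l) / X else if a = Suc (Suc l) then xx l / X else 0)" for a
  define S where "S = {1..n} - {Suc l}"
  have lS: "l \<in> S" "Suc (Suc l) \<in> S" "l \<noteq> Suc (Suc l)" unfolding S_def using l by auto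
  have finS: "finite S" unfolding S_def by simp
  have sum2: "(\<Sum>a\<in>S. \<alpha> a * f a) = xx (Suc l) / X * f l + xx l / X * f (Suc (Suc l))" for f
  proof -
    have "(\<Sum>a\<in>S. \<alpha> a * f a) = (\<Sum>a\<in>S. (if a = l then xx (Suc l) / X * f l else 0) + (if a = Suc (Suc l) then xx l / X * f (Suc (Suc l)) else 0))"
      unfolding \<alpha>_def by (rule sum.cong) auto
    also have "\<dots> = xx (Suc l) / X * f l + xx l / X * f (Suc (Suc l))"
      using lS finS by (simp add: sum.distrib sum.delta)
    finally show ?thesis .
  qed
  have "prob_on S \<alpha>"
    unfolding prob_on_def
  proof (intro conjI allI impI)
    fix x show "0 \<le> \<alpha> x" unfolding \<alpha>_def using p1 p2 Xp by auto
  next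
    fix x assume "x \<notin> S" then show "\<alpha> x = 0" unfolding \<alpha>_def using lS by auto
  next
    show "sum \<alpha> S = 1" using sum2[of "\<lambda>_. 1"] Xp unfolding X_def by (simp add: add_divide_distrib[symmetric])
  qed
  moreover have "\<forall>th\<in>{1,2}. u th (Suc l) \<le> mixed_util S u th \<alpha>"
  proof
    fix th :: nat assume th: "th \<in> {1,2}"
    have mu: "mixed_util S u th \<alpha> = (xx (Suc l) * u th l + xx l * u th (Suc (Suc l))) / X"
      unfolding mixed_util_def using sum2 by (simp add: add_divide_distrib)
    have e1: "u th (Suc l) = u th l + d l th" "u th (Suc (Suc l)) = u th l + d l th + d (Suc l) th"
      unfolding d_def by simp_all
    show "u th (Suc l) \<le> mixed_util S u th \<alpha>"
    proof (cases "th = 1")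
      case True
      have x1: "xx l = d l th" "xx (Suc l) = d (Suc l) th" unfolding xx_def using True by simp_all
      have "xx (Suc l) * u th l + xx l * u th (Suc (Suc l)) = X * (u th l + xx l)"
        unfolding e1 X_def x1 by (simp add: algebra_simps)
      then have "mixed_util S u th \<alpha> = u th l + xx l" using mu Xp by simp
      then show ?thesis using e1 True unfolding xx_def by simp
    next
      case False
      then have th2: "th = 2" using th by simp
      have "xx (Suc l) * u th l + xx l * u th (Suc (Suc l)) = X * u th l - xx l * (yy l + yy (Suc l))"
        unfolding e1 X_def using th2 unfolding yy_def by (simp add: algebra_simps)
      then have mu2: "mixed_util S u th \<alpha> = u th l - xx l * (yy l + yy (Suc l)) / X"
        using mu Xp by (simp add: diff_divide_distrib)
      have "xx l * (yy l + yy (Suc l)) \<le> yy l * X" unfolding X_def using neg by (simp add: algebra_simps)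
      then have "xx l * (yy l + yy (Suc l)) / X \<le> yy l" using Xp by (simp add: divide_le_eq)
      then show ?thesis using mu2 e1 th2 unfolding yy_def by simp
    qed
  qed
  ultimately show False using undom l unfolding S_def by force
qed

lemma tt_mono1: "1 \<le> l \<Longrightarrow> Suc l < n \<Longrightarrow> tt l < tt (Suc l)"
proof -
  assume l: "1 \<le> l" "Suc l < n"
  have p1: "0 < xx l" "0 < xx (Suc l)" using xy_pos l by auto
  show "tt l < tt (Suc l)" unfolding tt_def using thr_mono[OF l] p1 by (simp add: divide_less_eq less_divide_eq mult.commute)
qed

lemma tt_mono: assumes "1 \<le> i" "i \<le> j" "j < n" shows "tt i \<le> tt j"
  using assms(2,3)
proof (induction j rule: dec_induct)
  case base then show ?case by simp
next
  case (step j)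
  then show ?case using tt_mono1[of j] assms(1) by fastforce
qed

lemma cc_mono1: "1 \<le> l \<Longrightarrow> Suc l < n \<Longrightarrow> cc l < cc (Suc l)"
proof -
  assume l: "1 \<le> l" "Suc l < n"
  have p1: "0 < xx l" "0 < yy l" using xy_pos l by auto
  have p2: "0 < xx (Suc l)" "0 < yy (Suc l)" using xy_pos[of "Suc l"] l by auto
  have "yy l * (xx (Suc l) + yy (Suc l)) < yy (Suc l) * (xx l + yy l)"
    using thr_mono[OF l] by (simp add: algebra_simps)
  then show "cc l < cc (Suc l)" unfolding cc_def using p1 p2
    by (simp add: divide_less_eq less_divide_eq mult.commute)
qed

lemma cc_mono: assumes "1 \<le> i" "i < j" "j < n" shows "cc i < cc j"
proof -
  have "Suc i \<le> j" using assms by simp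
  then show ?thesis using assms(3)
  proof (induction j rule: dec_induct)
    case base then show ?case using cc_mono1[of i] assms(1) by simp
  next
    case (step j)
    then show ?case using cc_mono1[of j] assms(1) by fastforce
  qed
qed

lemma cc_range: "1 \<le> l \<Longrightarrow> l < n \<Longrightarrow> 0 < cc l \<and> cc l < 1"
  using xy_pos[of l] unfolding cc_def by (auto simp: divide_less_eq)

lemma sg_mono: "i < j \<Longrightarrow> j \<le> n \<Longrightarrow> sg i < sg j"
proof -
  assume ij: "i < j" "j \<le> n"
  show "sg i < sg j"
  proof (cases "i = 0")
    case True
    then show ?thesis unfolding sg_def using cc_range[of j] ij by auto
  next
    case False
    then have "i < n" using ij by simp
    then show ?thesis unfolding sg_def using cc_range[of i] cc_mono[of i j] ij False by auto
  qed
qed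

lemma sg_range: "0 \<le> sg i \<and> sg i \<le> 1"
  unfolding sg_def using cc_range[of i] by auto

lemma sg_n: "sg n = 1" and sg_0: "sg 0 = 0" using n1 unfolding sg_def by auto

lemma sg_cc: "1 \<le> l \<Longrightarrow> l < n \<Longrightarrow> sg l = cc l" unfolding sg_def by simp


lemma mixed_two:
  assumes k: "1 \<le> k" "k \<le> n" and lam: "0 \<le> lam" "lam \<le> 1" "k = n \<longrightarrow> lam = 0"
  shows "prob_on {1..n} (\<lambda>a. if a = k then 1 - lam else if a = Suc k then lam else 0)"
    and "mixed_util {1..n} u th (\<lambda>a. if a = k then 1 - lam else if a = Suc k then lam else 0)
           = u th k + lam * d k th"
proof -
  define \<alpha> where "\<alpha> = (\<lambda>a. if a = k then 1 - lam else if a = Suc k then lam else 0)"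
  have gen: "(\<Sum>a\<in>{1..n}. \<alpha> a * f a) = (1 - lam) * f k + lam * f (Suc k)" for f :: "nat \<Rightarrow> real"
  proof -
    have "(\<Sum>a\<in>{1..n}. \<alpha> a * f a) = (\<Sum>a\<in>{1..n}. (if a = k then (1 - lam) * f k else 0) + (if a = Suc k then lam * f (Suc k) else 0))"
      unfolding \<alpha>_def by (rule sum.cong) auto
    also have "\<dots> = (1 - lam) * f k + (if Suc k \<le> n then lam * f (Suc k) else 0)"
      using k by (simp add: sum.distrib sum.delta)
    also have "\<dots> = (1 - lam) * f k + lam * f (Suc k)" using lam k by auto
    finally show ?thesis .
  qed
  show "prob_on {1..n} (\<lambda>a. if a = k then 1 - lam else if a = Suc k then lam else 0)"
    unfolding prob_on_def \<alpha>_def[symmetric]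
  proof (intro conjI allI impI)
    fix x show "0 \<le> \<alpha> x" unfolding \<alpha>_def using lam by auto
  next
    fix x assume "x \<notin> {1..n}" then show "\<alpha> x = 0" unfolding \<alpha>_def using k lam by auto
  next
    show "sum \<alpha> {1..n} = 1" using gen[of "\<lambda>_. 1"] by simp
  qed
  show "mixed_util {1..n} u th (\<lambda>a. if a = k then 1 - lam else if a = Suc k then lam else 0) = u th k + lam * d k th"
    unfolding mixed_util_def \<alpha>_def[symmetric] gen d_def by (simp add: algebra_simps)
qed

lemma ZD:
  assumes c: "\<forall>l\<in>{1..<n}. 0 \<le> c l \<and> c l \<le> 1"
  shows "\<exists>\<alpha>. prob_on {1..n} \<alpha> \<and> (\<forall>th\<in>{1,2}. (\<Sum>l\<in>{1..<n}. c l * d l th) \<le> mixed_util {1..n} u th \<alpha>)"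
proof -
  define X where "X = (\<Sum>l\<in>{1..<n}. c l * xx l)"
  define F where "F k = (\<Sum>l\<in>{1..<k}. xx l)" for k
  have xxp: "\<And>l. l \<in> {1..<n} \<Longrightarrow> 0 < xx l" using xy_pos by auto
  have X0: "0 \<le> X" unfolding X_def using c xxp by (intro sum_nonneg) (simp add: less_imp_le)
  have Xn: "X \<le> F n" unfolding X_def F_def
  proof (rule sum_mono)
    fix l assume "l \<in> {1..<n}"
    then show "c l * xx l \<le> xx l" using c xxp[of l] by (simp add: mult_left_le_one_le less_imp_le)
  qed
  define KS where "KS = {k\<in>{1..n}. F k \<le> X}"
  have KSfin: "finite KS" unfolding KS_def by simp
  have KS1: "1 \<in> KS" unfolding KS_def F_def using n1 X0 by simp
  define k where "k = Max KS"
  have kin: "k \<in> KS" unfolding k_def using Max_in[OF KSfin] KS1 by blast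
  have kr: "1 \<le> k" "k \<le> n" "F k \<le> X" using kin unfolding KS_def by auto
  have kmax: "\<And>k'. k' \<in> {1..n} \<Longrightarrow> F k' \<le> X \<Longrightarrow> k' \<le> k" unfolding k_def by (rule Max_ge[OF KSfin]) (simp add: KS_def)
  have FSuc: "F (Suc j) = F j + xx j" if "1 \<le> j" for j
  proof -
    have "{1..<Suc j} = insert j {1..<j}" using that by auto
    then show ?thesis unfolding F_def by simp
  qed
  have Xlt: "X < F (Suc k)" if "k < n"
  proof (rule ccontr)
    assume "\<not> X < F (Suc k)"
    then have "Suc k \<le> k" using kmax[of "Suc k"] that by simp
    then show False by simp
  qed
  define lam where "lam = (if k < n then (X - F k) / xx k else 0)"
  have lam01: "0 \<le> lam" "lam \<le> 1"
  proof -
    show "0 \<le> lam"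
    proof (cases "k < n")
      case True then show ?thesis unfolding lam_def using kr xxp[of k] by simp
    qed (simp add: lam_def)
    show "lam \<le> 1"
    proof (cases "k < n")
      case True
      then have "X - F k \<le> xx k" using Xlt FSuc kr by fastforce
      then show ?thesis unfolding lam_def using True kr xxp[of k] by (simp add: divide_le_eq)
    qed (simp add: lam_def)
  qed
  have lamn: "k = n \<longrightarrow> lam = 0" unfolding lam_def by simp
  have Xeq: "X = F k + lam * xx k"
  proof (cases "k < n")
    case True then show ?thesis unfolding lam_def using kr xxp[of k] by simp
  next
    case False then have "k = n" using kr by simp
    then show ?thesis using Xn kr unfolding lam_def by simp
  qed
  define c' where "c' l = (if l < k then 1 else if l = k then lam else 0)" for l
  have c'sum: "(\<Sum>l\<in>{1..<n}. c' l * f l) = (\<Sum>l\<in>{1..<k}. f l) + lam * f k" for f :: "nat \<Rightarrow> real"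
  proof -
    have sp: "{1..<n} = {1..<k} \<union> {k..<n}" "{1..<k} \<inter> {k..<n} = {}" using kr by auto
    have "(\<Sum>l\<in>{1..<n}. c' l * f l) = (\<Sum>l\<in>{1..<k}. c' l * f l) + (\<Sum>l\<in>{k..<n}. c' l * f l)"
      unfolding sp(1) by (rule sum.union_disjoint) (use sp in auto)
    also have "(\<Sum>l\<in>{1..<k}. c' l * f l) = (\<Sum>l\<in>{1..<k}. f l)" unfolding c'_def by (rule sum.cong) auto
    also have "(\<Sum>l\<in>{k..<n}. c' l * f l) = (\<Sum>l\<in>{k..<n}. if l = k then lam * f k else 0)"
      unfolding c'_def by (rule sum.cong) auto
    also have "\<dots> = (if k < n then lam * f k else 0)" by (simp add: sum.delta)
    also have "\<dots> = lam * f k" using lamn kr by auto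
    finally show ?thesis .
  qed
  define \<alpha> where "\<alpha> = (\<lambda>a. if a = k then 1 - lam else if a = Suc k then lam else 0)"
  have pr: "prob_on {1..n} \<alpha>" unfolding \<alpha>_def by (rule mixed_two(1)) (use kr lam01 lamn in auto)
  have mu: "mixed_util {1..n} u th \<alpha> = (\<Sum>l\<in>{1..<n}. c' l * d l th)" if th: "th = 1 \<or> th = 2" for th
  proof -
    have "mixed_util {1..n} u th \<alpha> = u th k + lam * d k th" unfolding \<alpha>_def by (rule mixed_two(2)) (use kr lam01 lamn in auto)
    also have "\<dots> = (\<Sum>l\<in>{1..<k}. d l th) + lam * d k th" using u_tel[OF kr(1) th] by simp
    also have "\<dots> = (\<Sum>l\<in>{1..<n}. c' l * d l th)" using c'sum[of "\<lambda>l. d l th"] by simp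
    finally show ?thesis .
  qed
  have e1: "(\<Sum>l\<in>{1..<n}. c' l * xx l) = X" using c'sum[of xx] Xeq unfolding F_def by simp
  define w where "w l = (c' l - c l) * xx l" for l
  have sw: "(\<Sum>l\<in>{1..<n}. w l) = 0" unfolding w_def using e1 unfolding X_def by (simp add: algebra_simps sum_subtractf)
  define T where "T = tt (if k < n then k else n - 1)"
  have termle: "w l * (tt l - T) \<le> 0" if l: "l \<in> {1..<n}" for l
  proof -
    consider "l < k" | "l = k" | "k < l" by linarith
    then show ?thesis
    proof cases
      case 1
      then have "w l \<ge> 0" unfolding w_def c'_def using c l xxp[of l] by simp
      moreover have "tt l \<le> T"
      proof (cases "k < n")
        case True then show ?thesis unfolding T_def using tt_mono[of l k] l 1 by simp
      next
        case False then have "l \<le> n - 1" using l by auto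
        then show ?thesis unfolding T_def using tt_mono[of l "n - 1"] l False by simp
      qed
      ultimately show ?thesis by (simp add: mult_nonneg_nonpos)
    next
      case 2
      then have "k < n" using l by simp
      then show ?thesis unfolding T_def using 2 by simp
    next
      case 3
      then have kn: "k < n" using l by simp
      have "w l \<le> 0" unfolding w_def c'_def using c l xxp[of l] 3 by (simp add: mult_nonneg_nonneg)
      moreover have "T \<le> tt l" unfolding T_def using tt_mono[of k l] kn kr 3 l by simp
      ultimately show ?thesis by (simp add: mult_nonpos_nonneg)
    qed
  qed
  have th2: "(\<Sum>l\<in>{1..<n}. c l * d l 2) \<le> (\<Sum>l\<in>{1..<n}. c' l * d l 2)"
  proof -
    have yy_eq: "yy l = tt l * xx l" if "l \<in> {1..<n}" for l unfolding tt_def using xxp[OF that] by simp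
    have "(\<Sum>l\<in>{1..<n}. c' l * d l 2) - (\<Sum>l\<in>{1..<n}. c l * d l 2) = - (\<Sum>l\<in>{1..<n}. w l * tt l)"
    proof -
      have "(\<Sum>l\<in>{1..<n}. c' l * d l 2) - (\<Sum>l\<in>{1..<n}. c l * d l 2) = (\<Sum>l\<in>{1..<n}. - (w l * tt l))"
        unfolding sum_subtractf[symmetric]
      proof (rule sum.cong[OF refl])
        fix l assume l: "l \<in> {1..<n}"
        have "d l 2 = - (tt l * xx l)" using yy_eq[OF l] unfolding yy_def by simp
        then show "c' l * d l 2 - c l * d l 2 = - (w l * tt l)" unfolding w_def by (simp add: algebra_simps)
      qed
      then show ?thesis by (simp add: sum_negf)
    qed
    moreover have "(\<Sum>l\<in>{1..<n}. w l * tt l) = (\<Sum>l\<in>{1..<n}. w l * (tt l - T))"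
    proof -
      have "(\<Sum>l\<in>{1..<n}. w l * (tt l - T)) = (\<Sum>l\<in>{1..<n}. w l * tt l) - T * (\<Sum>l\<in>{1..<n}. w l)"
        by (simp add: algebra_simps sum_subtractf sum_distrib_left)
      then show ?thesis using sw by simp
    qed
    moreover have "(\<Sum>l\<in>{1..<n}. w l * (tt l - T)) \<le> 0" using termle by (intro sum_nonpos) auto
    ultimately show ?thesis by simp
  qed
  have th1: "(\<Sum>l\<in>{1..<n}. c l * d l 1) \<le> (\<Sum>l\<in>{1..<n}. c' l * d l 1)"
    using e1 unfolding X_def xx_def by simp
  show ?thesis
  proof (intro exI conjI ballI)
    show "prob_on {1..n} \<alpha>" by (rule pr)
  next
    fix th :: nat assume "th \<in> {1,2}"
    then show "(\<Sum>l\<in>{1..<n}. c l * d l th) \<le> mixed_util {1..n} u th \<alpha>"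
      using mu th1 th2 by auto
  qed
qed

end

lemma sum_inl_inr:
  assumes "finite Y" "finite I"
  shows "sum f (Inl ` Y \<union> Inr ` I) = (\<Sum>y\<in>Y. f (Inl y)) + (\<Sum>i\<in>I. f (Inr i))"
proof -
  have "sum f (Inl ` Y \<union> Inr ` I) = sum f (Inl ` Y) + sum f (Inr ` I)"
    by (rule sum.union_disjoint) (use assms in auto)
  also have "sum f (Inl ` Y) = (\<Sum>y\<in>Y. f (Inl y))" by (rule sum.reindex_cong[of Inl]) auto
  also have "sum f (Inr ` I) = (\<Sum>i\<in>I. f (Inr i))" by (rule sum.reindex_cong[of Inr]) auto
  finally show ?thesis .
qed

lemma marg:
  assumes finJ: "finite J" and finY: "\<forall>j\<in>J. finite (Y j)" and Q: "Q \<in> couplings Th J Y P"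
    and th: "th \<in> Th" and j: "j \<in> J"
  shows "(\<Sum>ys\<in>PiE J Y. Q th ys * g (ys j)) = (\<Sum>y\<in>Y j. P j th y * g y)"
proof -
  have finP: "finite (PiE J Y)" using finJ finY by (intro finite_PiE) auto
  have img: "(\<lambda>ys. ys j) ` PiE J Y \<subseteq> Y j" using j by (auto simp: PiE_def Pi_def)
  have "(\<Sum>ys\<in>PiE J Y. Q th ys * g (ys j)) = (\<Sum>y\<in>Y j. \<Sum>ys\<in>{ys. ys \<in> PiE J Y \<and> ys j = y}. Q th ys * g (ys j))"
    by (rule sum.group[symmetric, OF finP _ img]) (use finY j in auto)
  also have "\<dots> = (\<Sum>y\<in>Y j. P j th y * g y)"
  proof (rule sum.cong[OF refl])
    fix y assume y: "y \<in> Y j"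
    have "(\<Sum>ys\<in>{ys. ys \<in> PiE J Y \<and> ys j = y}. Q th ys * g (ys j)) = (\<Sum>ys\<in>{ys \<in> PiE J Y. ys j = y}. Q th ys) * g y"
      by (simp add: sum_distrib_right)
    also have "\<dots> = P j th y * g y" using Q th j y unfolding couplings_def by auto
    finally show "(\<Sum>ys\<in>{ys. ys \<in> PiE J Y \<and> ys j = y}. Q th ys * g (ys j)) = P j th y * g y" .
  qed
  finally show ?thesis .
qed

lemma mixed_util_bin:
  assumes "\<forall>th a. cu th a = (if a = 1 then e th else 0)"
  shows "mixed_util {0,1} cu th \<alpha> = \<alpha> 1 * e th"
  unfolding mixed_util_def using assms by simp

lemma Vsingle_binary:
  fixes Yj :: "'y set" and Pj :: "nat \<Rightarrow> 'y \<Rightarrow> real" and cu :: "nat \<Rightarrow> nat \<Rightarrow> real" and e :: "nat \<Rightarrow> real"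
  assumes fin: "finite Yj" and cu: "\<forall>th a. cu th a = (if a = 1 then e th else 0)"
  shows "Vsingle {1,2} Yj Pj {0,1} cu = (\<Sum>y\<in>Yj. max 0 (Pj 1 y * e 1 + Pj 2 y * e 2))"
proof -
  define E where "E y = Pj 1 y * e 1 + Pj 2 y * e 2" for y
  define S where "S = {\<sigma> :: 'y \<Rightarrow> nat \<Rightarrow> real. \<forall>y\<in>Yj. prob_on {0,1} (\<sigma> y)}"
  define f where "f \<sigma> = (\<Sum>th\<in>{1,2}. \<Sum>y\<in>Yj. Pj th y * mixed_util {0,1} cu th (\<sigma> y))" for \<sigma> :: "'y \<Rightarrow> nat \<Rightarrow> real"
  have feq: "f \<sigma> = (\<Sum>y\<in>Yj. \<sigma> y 1 * E y)" for \<sigma> :: "'y \<Rightarrow> nat \<Rightarrow> real"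
  proof -
    have "f \<sigma> = (\<Sum>y\<in>Yj. Pj 1 y * (\<sigma> y 1 * e 1)) + (\<Sum>y\<in>Yj. Pj 2 y * (\<sigma> y 1 * e 2))"
      unfolding f_def using mixed_util_bin[OF cu] by simp
    also have "\<dots> = (\<Sum>y\<in>Yj. \<sigma> y 1 * E y)" unfolding E_def by (simp add: sum.distrib[symmetric] algebra_simps)
    finally show ?thesis .
  qed
  have s01: "0 \<le> \<sigma> y 1 \<and> \<sigma> y 1 \<le> 1" if "\<sigma> \<in> S" "y \<in> Yj" for \<sigma> :: "'y \<Rightarrow> nat \<Rightarrow> real" and y
  proof -
    have p: "prob_on {0,1} (\<sigma> y)" using that unfolding S_def by auto
    have e: "sum (\<sigma> y) {0,1} = \<sigma> y 0 + \<sigma> y 1" by simp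
    from p have "\<sigma> y 0 + \<sigma> y 1 = 1" "0 \<le> \<sigma> y 0" "0 \<le> \<sigma> y 1" unfolding prob_on_def e by auto
    then show ?thesis by simp
  qed
  have ub: "f \<sigma> \<le> (\<Sum>y\<in>Yj. max 0 (E y))" if "\<sigma> \<in> S" for \<sigma> :: "'y \<Rightarrow> nat \<Rightarrow> real"
    unfolding feq
  proof (rule sum_mono)
    fix y assume y: "y \<in> Yj"
    show "\<sigma> y 1 * E y \<le> max 0 (E y)"
    proof (cases "0 \<le> E y")
      case True then show ?thesis using s01[OF that y] by (simp add: mult_left_le_one_le)
    next
      case False then show ?thesis using s01[OF that y] by (simp add: mult_nonneg_nonpos)
    qed
  qed
  define \<sigma>s where "\<sigma>s y = (\<lambda>a::nat. if a = 1 then (if 0 < E y then 1 else 0) else if a = 0 then (if 0 < E y then 0 else 1) else (0::real))" for y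
  have sS: "\<sigma>s \<in> S" unfolding S_def prob_on_def \<sigma>s_def by auto
  have fs: "f \<sigma>s = (\<Sum>y\<in>Yj. max 0 (E y))" unfolding feq \<sigma>s_def by (rule sum.cong) auto
  have "Vsingle {1,2} Yj Pj {0,1} cu = Sup (f ` S)"
    unfolding Vsingle_def f_def S_def by simp
  also have "\<dots> = (\<Sum>y\<in>Yj. max 0 (E y))"
  proof (rule cSup_eq_maximum)
    show "(\<Sum>y\<in>Yj. max 0 (E y)) \<in> f ` S" using sS fs by (metis image_eqI)
  next
    fix x assume "x \<in> f ` S" then show "x \<le> (\<Sum>y\<in>Yj. max 0 (E y))" using ub by auto
  qed
  finally show ?thesis unfolding E_def .
qed

lemma max0_scale:
  fixes k z :: real
  assumes "0 \<le> k"
  shows "max 0 (k * z) = k * max 0 z"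
proof (cases "0 \<le> z")
  case True
  then have "0 \<le> k * z" using assms by simp
  then show ?thesis using True by simp
next
  case False
  then have "k * z \<le> 0" using assms by (simp add: mult_nonneg_nonpos)
  then show ?thesis using False by simp
qed

locale dexp = dprob n u for n u +
  fixes J :: "nat set" and Y :: "nat \<Rightarrow> 'y set" and P :: "nat \<Rightarrow> nat \<Rightarrow> 'y \<Rightarrow> real"
  assumes finJ: "finite J" and neJ: "J \<noteq> {}" and finY: "\<forall>j\<in>J. finite (Y j)"
    and expP: "\<forall>j\<in>J. \<forall>th\<in>{1,2}. prob_on (Y j) (P j th)"
begin

definition mm where "mm j y = P j 1 y + P j 2 y"
definition ps where "ps j y = P j 1 y / mm j y"
definition call where "call j t = (\<Sum>y\<in>Y j. mm j y * max 0 (ps j y - t))"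
definition Bv where "Bv j l = (\<Sum>y\<in>Y j. max 0 (P j 1 y * d l 1 + P j 2 y * d l 2))"
definition Dg where "Dg i = Max ((\<lambda>j. call j (sg i)) ` J)"

lemma Pnn: "j \<in> J \<Longrightarrow> th \<in> {1,2} \<Longrightarrow> 0 \<le> P j th y"
  using expP unfolding prob_on_def by auto
lemma Psum: "j \<in> J \<Longrightarrow> th \<in> {1,2} \<Longrightarrow> sum (P j th) (Y j) = 1"
  using expP unfolding prob_on_def by auto
lemma Poff: "j \<in> J \<Longrightarrow> th \<in> {1,2} \<Longrightarrow> y \<notin> Y j \<Longrightarrow> P j th y = 0"
  using expP unfolding prob_on_def by auto

lemma mm_nn: "j \<in> J \<Longrightarrow> 0 \<le> mm j y" unfolding mm_def using Pnn[of j 1] Pnn[of j 2] by simp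

lemma mm_ps: "j \<in> J \<Longrightarrow> mm j y * ps j y = P j 1 y"
proof -
  assume j: "j \<in> J"
  show ?thesis
  proof (cases "mm j y = 0")
    case True
    then have "P j 1 y = 0" unfolding mm_def using Pnn[OF j, of 1 y] Pnn[OF j, of 2 y] by simp
    then show ?thesis using True by simp
  next
    case False then show ?thesis unfolding ps_def by simp
  qed
qed

lemma ps_range: "j \<in> J \<Longrightarrow> 0 \<le> ps j y \<and> ps j y \<le> 1"
proof -
  assume j: "j \<in> J"
  have a: "0 \<le> P j 1 y" "0 \<le> P j 2 y" using Pnn[OF j, of 1 y] Pnn[OF j, of 2 y] by auto
  show ?thesis
  proof (cases "mm j y = 0")
    case True then show ?thesis unfolding ps_def by simp
  next
    case False
    then have "0 < mm j y" using a unfolding mm_def by simp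
    then show ?thesis unfolding ps_def mm_def using a by (auto simp: divide_le_eq)
  qed
qed

lemma sum_mm: "j \<in> J \<Longrightarrow> (\<Sum>y\<in>Y j. mm j y) = 2"
  unfolding mm_def using Psum[of j 1] Psum[of j 2] by (simp add: sum.distrib)

lemma sum_mmps: "j \<in> J \<Longrightarrow> (\<Sum>y\<in>Y j. mm j y * ps j y) = 1"
  using mm_ps Psum[of j 1] by simp

lemma call_nn: "j \<in> J \<Longrightarrow> 0 \<le> call j t"
  unfolding call_def using mm_nn by (intro sum_nonneg) simp

lemma call0: "j \<in> J \<Longrightarrow> call j 0 = 1"
proof -
  assume j: "j \<in> J"
  have "call j 0 = (\<Sum>y\<in>Y j. mm j y * ps j y)" unfolding call_def
    by (rule sum.cong) (use ps_range[OF j] in auto)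
  then show ?thesis using sum_mmps[OF j] by simp
qed

lemma call1: "j \<in> J \<Longrightarrow> call j 1 = 0"
proof -
  assume j: "j \<in> J"
  show ?thesis unfolding call_def by (rule sum.neutral) (use ps_range[OF j] in auto)
qed

lemma call_lb: "j \<in> J \<Longrightarrow> 1 - 2 * t \<le> call j t"
proof -
  assume j: "j \<in> J"
  have "(\<Sum>y\<in>Y j. mm j y * (ps j y - t)) \<le> call j t"
    unfolding call_def by (rule sum_mono) (use mm_nn[OF j] in \<open>simp add: mult_left_mono\<close>)
  moreover have "(\<Sum>y\<in>Y j. mm j y * (ps j y - t)) = 1 - 2 * t"
  proof -
    have "(\<Sum>y\<in>Y j. mm j y * (ps j y - t)) = (\<Sum>y\<in>Y j. mm j y * ps j y - t * mm j y)"
      by (rule sum.cong) (simp_all add: algebra_simps)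
    also have "\<dots> = (\<Sum>y\<in>Y j. mm j y * ps j y) - t * (\<Sum>y\<in>Y j. mm j y)"
      by (simp add: sum_subtractf sum_distrib_left)
    finally show ?thesis using sum_mmps[OF j] sum_mm[OF j] by simp
  qed
  ultimately show ?thesis by simp
qed

lemma call_conv:
  assumes j: "j \<in> J" and abc: "a < b" "b < c"
  shows "call j b * (c - a) \<le> call j a * (c - b) + call j c * (b - a)"
proof -
  define lam where "lam = (c - b) / (c - a)"
  have ca: "0 < c - a" using abc by simp
  have lam01: "0 \<le> lam" "lam \<le> 1" unfolding lam_def using abc by (auto simp: divide_le_eq)
  have l1: "1 - lam = (b - a) / (c - a)" unfolding lam_def using ca by (simp add: field_simps)
  have lamc: "b = lam * a + (1 - lam) * c"
  proof -
    have "lam * a + (1 - lam) * c = ((c - b) * a + (b - a) * c) / (c - a)"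
      unfolding l1 unfolding lam_def by (simp add: add_divide_distrib[symmetric])
    also have "\<dots> = b * (c - a) / (c - a)" by (simp add: algebra_simps)
    also have "\<dots> = b" using ca by simp
    finally show ?thesis by simp
  qed
  have "call j b \<le> lam * call j a + (1 - lam) * call j c"
  proof -
    have "call j b \<le> (\<Sum>y\<in>Y j. lam * (mm j y * max 0 (ps j y - a)) + (1 - lam) * (mm j y * max 0 (ps j y - c)))"
      unfolding call_def
    proof (rule sum_mono)
      fix y assume "y \<in> Y j"
      have "max 0 (ps j y - b) \<le> lam * max 0 (ps j y - a) + (1 - lam) * max 0 (ps j y - c)"
        using maxconv(1)[OF lam01 lamc] abc by simp
      then have "mm j y * max 0 (ps j y - b) \<le> mm j y * (lam * max 0 (ps j y - a) + (1 - lam) * max 0 (ps j y - c))"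
        using mm_nn[OF j] by (rule mult_left_mono)
      then show "mm j y * max 0 (ps j y - b) \<le> lam * (mm j y * max 0 (ps j y - a)) + (1 - lam) * (mm j y * max 0 (ps j y - c))"
        by (simp add: algebra_simps)
    qed
    then show ?thesis unfolding call_def by (simp add: sum.distrib sum_distrib_left)
  qed
  then have "call j b * (c - a) \<le> (lam * call j a + (1 - lam) * call j c) * (c - a)"
    using ca by (simp add: mult_right_mono)
  also have "\<dots> = call j a * (lam * (c - a)) + call j c * ((1 - lam) * (c - a))"
    by (simp add: algebra_simps)
  also have "\<dots> = call j a * (c - b) + call j c * (b - a)"
  proof -
    have "lam * (c - a) = c - b" using ca unfolding lam_def by simp
    moreover have "(1 - lam) * (c - a) = b - a" using ca unfolding l1 by simp
    ultimately show ?thesis by simp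
  qed
  finally show ?thesis .
qed

lemma Bv_call:
  assumes j: "j \<in> J" and l: "1 \<le> l" "l < n"
  shows "Bv j l = (xx l + yy l) * call j (sg l)"
proof -
  have xy: "0 < xx l" "0 < yy l" using xy_pos l by auto
  have sgl: "sg l = yy l / (xx l + yy l)" using sg_cc[OF l] unfolding cc_def by simp
  have "Bv j l = (\<Sum>y\<in>Y j. (xx l + yy l) * (mm j y * max 0 (ps j y - sg l)))"
    unfolding Bv_def
  proof (rule sum.cong[OF refl])
    fix y assume "y \<in> Y j"
    have e: "P j 1 y * d l 1 + P j 2 y * d l 2 = (xx l + yy l) * (mm j y * (ps j y - sg l))"
    proof -
      have "(xx l + yy l) * (mm j y * (ps j y - sg l)) = (xx l + yy l) * (mm j y * ps j y) - mm j y * ((xx l + yy l) * sg l)"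
        by (simp add: algebra_simps)
      also have "\<dots> = (xx l + yy l) * P j 1 y - mm j y * yy l" unfolding mm_ps[OF j] sgl using xy by simp
      also have "\<dots> = P j 1 y * d l 1 + P j 2 y * d l 2" unfolding mm_def xx_def yy_def by (simp add: algebra_simps)
      finally show ?thesis by simp
    qed
    have "max 0 ((xx l + yy l) * (mm j y * (ps j y - sg l))) = (xx l + yy l) * (mm j y * max 0 (ps j y - sg l))"
    proof -
      have p: "0 \<le> (xx l + yy l) * mm j y" using xy mm_nn[OF j] by simp
      have "max 0 ((xx l + yy l) * mm j y * (ps j y - sg l)) = (xx l + yy l) * mm j y * max 0 (ps j y - sg l)"
        using max0_scale[OF p] by simp
      then show ?thesis by (simp add: mult.assoc)
    qed
    then show "max 0 (P j 1 y * d l 1 + P j 2 y * d l 2) = (xx l + yy l) * (mm j y * max 0 (ps j y - sg l))"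
      using e by simp
  qed
  then show ?thesis unfolding call_def by (simp add: sum_distrib_left)
qed

lemma Dg_ge: "j \<in> J \<Longrightarrow> call j (sg i) \<le> Dg i"
  unfolding Dg_def using finJ by (intro Max_ge) auto

lemma Dg_in: "\<exists>j\<in>J. Dg i = call j (sg i)"
proof -
  have "Dg i \<in> (\<lambda>j. call j (sg i)) ` J" unfolding Dg_def using finJ neJ by (intro Max_in) auto
  then show ?thesis by auto
qed

lemma Dg0: "Dg 0 = 1"
  using Dg_in[of 0] call0 sg_0 by auto

lemma Dgn: "Dg n = 0"
  using Dg_in[of n] call1 sg_n by auto

lemma Dg_nn: "0 \<le> Dg i" using Dg_in[of i] call_nn by auto

lemma grid_nu:
  "\<exists>\<nu>. (\<forall>i\<le>n. 0 \<le> \<nu> i) \<and> (\<Sum>i\<le>n. \<nu> i) = 2 \<and> (\<forall>l\<le>n. (\<Sum>i\<le>n. \<nu> i * max 0 (sg i - sg l)) = Dg l)"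
proof (rule grid_measure)
  show "1 \<le> n" by (rule n1)
  show "\<And>i j. i < j \<Longrightarrow> j \<le> n \<Longrightarrow> sg i < sg j" by (rule sg_mono)
  show "Dg n = 0" by (rule Dgn)
  show "0 \<le> Dg (n - 1)" by (rule Dg_nn)
  show "(Dg 0 - Dg 1) / (sg 1 - sg 0) \<le> 2"
  proof -
    obtain j where j: "j \<in> J" using neJ by auto
    have s1: "0 < sg 1" using sg_mono[of 0 1] n1 sg_0 by simp
    have "1 - 2 * sg 1 \<le> Dg 1" using call_lb[OF j, of "sg 1"] Dg_ge[OF j, of 1] by simp
    then have "Dg 0 - Dg 1 \<le> 2 * sg 1" using Dg0 by simp
    then show ?thesis using s1 sg_0 by (simp add: divide_le_eq)
  qed
  show "Dg i * (sg (Suc i) - sg (i - 1)) \<le> Dg (i - 1) * (sg (Suc i) - sg i) + Dg (Suc i) * (sg i - sg (i - 1))"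
    if "0 < i" "i < n" for i
  proof -
    obtain j where j: "j \<in> J" "Dg i = call j (sg i)" using Dg_in by blast
    have o: "sg (i - 1) < sg i" "sg i < sg (Suc i)" using sg_mono that by auto
    have "Dg i * (sg (Suc i) - sg (i - 1)) \<le> call j (sg (i - 1)) * (sg (Suc i) - sg i) + call j (sg (Suc i)) * (sg i - sg (i - 1))"
      using call_conv[OF j(1) o] j(2) by simp
    also have "\<dots> \<le> Dg (i - 1) * (sg (Suc i) - sg i) + Dg (Suc i) * (sg i - sg (i - 1))"
      using Dg_ge[OF j(1)] o by (intro add_mono mult_right_mono) auto
    finally show ?thesis .
  qed
qed


lemma pieces:
  assumes nu: "\<forall>i\<le>n. 0 \<le> \<nu>g i" "(\<Sum>i\<le>n. \<nu>g i) = 2" "\<forall>l\<le>n. (\<Sum>i\<le>n. \<nu>g i * max 0 (sg i - sg l)) = Dg l"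
    and j: "j \<in> J"
  shows "\<exists>w. (\<forall>y i. 0 \<le> w y i) \<and> (\<forall>y\<in>Y j. (\<Sum>i\<le>n. w y i) = mm j y \<and> (\<Sum>i\<le>n. w y i * sg i) = P j 1 y)
            \<and> (\<forall>i\<le>n. (\<Sum>y\<in>Y j. w y i) = \<nu>g i)"
proof -
  define A :: "('y + nat) set" where "A = Inl ` Y j \<union> Inr ` {..n}"
  define pos :: "'y + nat \<Rightarrow> real" where "pos = case_sum (ps j) sg"
  define \<nu>' :: "'y + nat \<Rightarrow> real" where "\<nu>' = case_sum (\<lambda>_. 0) \<nu>g"
  define \<mu> :: "'y + nat \<Rightarrow> real" where "\<mu> = case_sum (mm j) (\<lambda>_. 0)"
  have finYj: "finite (Y j)" using finY j by simp
  have sA: "sum f A = (\<Sum>y\<in>Y j. f (Inl y)) + (\<Sum>i\<le>n. f (Inr i))" for f :: "'y + nat \<Rightarrow> real"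
    unfolding A_def by (rule sum_inl_inr) (use finYj in auto)
  interpret S: strg A Inr n sg pos \<nu>'
  proof
    show "finite A" unfolding A_def using finYj by simp
    show "1 \<le> n" by (rule n1)
    show "\<And>i. i \<le> n \<Longrightarrow> Inr i \<in> A" unfolding A_def by auto
    show "inj_on Inr {..n}" by (simp add: inj_on_def)
    show "\<And>i. i \<le> n \<Longrightarrow> pos (Inr i) = sg i" unfolding pos_def by simp
    show "\<And>i k. i < k \<Longrightarrow> k \<le> n \<Longrightarrow> sg i < sg k" by (rule sg_mono)
    show "\<And>x. x \<in> A \<Longrightarrow> sg 0 \<le> pos x"
      unfolding A_def pos_def using ps_range[OF j] sg_range sg_0 by auto
    show "\<And>x. x \<in> A \<Longrightarrow> pos x \<le> sg n"
      unfolding A_def pos_def using ps_range[OF j] sg_range sg_n by auto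
    show "\<And>x. x \<in> A \<Longrightarrow> 0 \<le> \<nu>' x" unfolding A_def \<nu>'_def using nu(1) by auto
    show "\<And>x. x \<in> A \<Longrightarrow> x \<notin> Inr ` {..n} \<Longrightarrow> \<nu>' x = 0" unfolding A_def \<nu>'_def by auto
  qed
  have mean_nu: "(\<Sum>i\<le>n. \<nu>g i * sg i) = 1"
  proof -
    have "(\<Sum>i\<le>n. \<nu>g i * sg i) = (\<Sum>i\<le>n. \<nu>g i * max 0 (sg i - sg 0))"
      by (rule sum.cong) (use sg_range sg_0 in auto)
    also have "\<dots> = Dg 0" using nu(3) by simp
    finally show ?thesis using Dg0 by simp
  qed
  have good: "S.good \<mu>"
    unfolding S.good_def
  proof (intro conjI allI impI ballI)
    fix x assume "x \<in> A" then show "0 \<le> \<mu> x" unfolding A_def \<mu>_def using mm_nn[OF j] by auto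
  next
    show "sum \<mu> A = sum \<nu>' A" unfolding sA \<mu>_def \<nu>'_def using sum_mm[OF j] nu(2) by simp
  next
    show "(\<Sum>x\<in>A. \<mu> x * pos x) = (\<Sum>x\<in>A. \<nu>' x * pos x)"
      unfolding sA \<mu>_def \<nu>'_def pos_def using sum_mmps[OF j] mean_nu by simp
  next
    fix l assume l: "l \<le> n"
    have "S.C \<nu>' (sg l) = Dg l" unfolding S.C_def unfolding sA \<nu>'_def pos_def using nu(3) l by simp
    moreover have "S.C \<mu> (sg l) = call j (sg l)" unfolding S.C_def unfolding sA \<mu>_def pos_def call_def by simp
    ultimately show "0 \<le> S.G \<mu> l" unfolding S.G_def using Dg_ge[OF j] by simp
  qed
  obtain \<pi> where tr: "S.transp \<mu> \<pi>" using S.strassen[OF good] by blast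
  have pnn: "\<forall>x y. 0 \<le> \<pi> x y" and rows: "\<forall>x\<in>A. sum (\<pi> x) A = \<mu> x \<and> (\<Sum>y\<in>A. \<pi> x y * pos y) = \<mu> x * pos x"
    and cols: "\<forall>y\<in>A. (\<Sum>x\<in>A. \<pi> x y) = \<nu>' y" using tr unfolding S.transp_def by auto
  have finA: "finite A" unfolding A_def using finYj by simp
  have colL: "\<pi> x (Inl y') = 0" if "x \<in> A" "y' \<in> Y j" for x y'
  proof -
    have yA: "Inl y' \<in> A" unfolding A_def using that by simp
    have "(\<Sum>x\<in>A. \<pi> x (Inl y')) = \<nu>' (Inl y')" using cols yA by blast
    then have "(\<Sum>x\<in>A. \<pi> x (Inl y')) = 0" unfolding \<nu>'_def by simp
    moreover have "\<forall>x. 0 \<le> \<pi> x (Inl y')" using pnn by simp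
    ultimately show ?thesis using row_zero[OF finA, of "\<lambda>x. \<pi> x (Inl y')"] that(1) by blast
  qed
  have rowR: "\<pi> (Inr i') y = 0" if "i' \<le> n" "y \<in> A" for i' y
  proof -
    have iA: "Inr i' \<in> A" unfolding A_def using that by simp
    have "sum (\<pi> (Inr i')) A = \<mu> (Inr i')" using rows iA by blast
    then have "sum (\<pi> (Inr i')) A = 0" unfolding \<mu>_def by simp
    moreover have "\<forall>x. 0 \<le> \<pi> (Inr i') x" using pnn by simp
    ultimately show ?thesis using row_zero[OF finA, of "\<pi> (Inr i')"] that(2) by blast
  qed
  define w where "w y i = \<pi> (Inl y) (Inr i)" for y i
  have W1: "(\<Sum>i\<le>n. w y i) = mm j y" if y: "y \<in> Y j" for y
  proof -
    have yA: "Inl y \<in> A" unfolding A_def using y by simp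
    have "sum (\<pi> (Inl y)) A = mm j y" using rows yA unfolding \<mu>_def by auto
    moreover have "(\<Sum>y'\<in>Y j. \<pi> (Inl y) (Inl y')) = 0" using colL yA by simp
    ultimately show ?thesis unfolding sA w_def by simp
  qed
  have W2: "(\<Sum>i\<le>n. w y i * sg i) = P j 1 y" if y: "y \<in> Y j" for y
  proof -
    have yA: "Inl y \<in> A" unfolding A_def using y by simp
    have "(\<Sum>y'\<in>A. \<pi> (Inl y) y' * pos y') = mm j y * ps j y" using rows yA unfolding \<mu>_def pos_def by auto
    moreover have "(\<Sum>y'\<in>Y j. \<pi> (Inl y) (Inl y') * pos (Inl y')) = 0" using colL yA by simp
    ultimately show ?thesis unfolding sA w_def using mm_ps[OF j] by (simp add: pos_def)
  qed
  have W3: "(\<Sum>y\<in>Y j. w y i) = \<nu>g i" if i: "i \<le> n" for i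
  proof -
    have iA: "Inr i \<in> A" unfolding A_def using i by simp
    have "(\<Sum>x\<in>A. \<pi> x (Inr i)) = \<nu>g i" using cols iA unfolding \<nu>'_def by auto
    moreover have "(\<Sum>i'\<le>n. \<pi> (Inr i') (Inr i)) = 0" using rowR iA by simp
    ultimately show ?thesis unfolding sA w_def by simp
  qed
  have "\<forall>y i. 0 \<le> w y i" unfolding w_def using pnn by simp
  then show ?thesis using W1 W2 W3 by blast
qed


lemma max0_sum_le:
  fixes f :: "'a \<Rightarrow> real"
  shows "max 0 (sum f I) \<le> (\<Sum>i\<in>I. max 0 (f i))"
proof -
  have "sum f I \<le> (\<Sum>i\<in>I. max 0 (f i))" by (rule sum_mono) simp
  moreover have "0 \<le> (\<Sum>i\<in>I. max 0 (f i))" by (rule sum_nonneg) simp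
  ultimately show ?thesis by simp
qed

lemma exists_Q:
  "\<exists>Q\<in>couplings {1,2} J Y P. \<forall>l\<in>{1..<n}.
      (\<Sum>ys\<in>PiE J Y. max 0 (Q 1 ys * d l 1 + Q 2 ys * d l 2)) \<le> Max ((\<lambda>j. Bv j l) ` J)"
proof -
  obtain \<nu>g where nu: "\<forall>i\<le>n. 0 \<le> \<nu>g i" "(\<Sum>i\<le>n. \<nu>g i) = 2" "\<forall>l\<le>n. (\<Sum>i\<le>n. \<nu>g i * max 0 (sg i - sg l)) = Dg l"
    using grid_nu by blast
  have "\<forall>j\<in>J. \<exists>w. (\<forall>y i. 0 \<le> w y i) \<and> (\<forall>y\<in>Y j. (\<Sum>i\<le>n. w y i) = mm j y \<and> (\<Sum>i\<le>n. w y i * sg i) = P j 1 y)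
            \<and> (\<forall>i\<le>n. (\<Sum>y\<in>Y j. w y i) = \<nu>g i)"
    using pieces[OF nu] by blast
  then obtain W where W: "\<forall>j\<in>J. (\<forall>y i. 0 \<le> W j y i) \<and> (\<forall>y\<in>Y j. (\<Sum>i\<le>n. W j y i) = mm j y \<and> (\<Sum>i\<le>n. W j y i * sg i) = P j 1 y)
            \<and> (\<forall>i\<le>n. (\<Sum>y\<in>Y j. W j y i) = \<nu>g i)"
    by (rule bchoice[elim_format]) blast
  have Wnn: "\<And>j y i. j \<in> J \<Longrightarrow> 0 \<le> W j y i" using W by blast
  have W1: "\<And>j y. j \<in> J \<Longrightarrow> y \<in> Y j \<Longrightarrow> (\<Sum>i\<le>n. W j y i) = mm j y" using W by blast
  have W2: "\<And>j y. j \<in> J \<Longrightarrow> y \<in> Y j \<Longrightarrow> (\<Sum>i\<le>n. W j y i * sg i) = P j 1 y" using W by blast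
  have W3: "\<And>j i. j \<in> J \<Longrightarrow> i \<le> n \<Longrightarrow> (\<Sum>y\<in>Y j. W j y i) = \<nu>g i" using W by blast
  have finPi: "finite (PiE J Y)" using finJ finY by (intro finite_PiE) auto
  define Kk where "Kk j y i = W j y i / \<nu>g i" for j y i
  define rr where "rr th i = (if th = (1::nat) then sg i else 1 - sg i)" for th i
  define PK where "PK ys i = (\<Prod>j\<in>J. Kk j (ys j) i)" for ys :: "nat \<Rightarrow> 'y" and i
  define ind where "ind i = (if \<nu>g i = 0 then 0 else (1::real))" for i
  define Q where "Q th ys = (if ys \<in> PiE J Y then \<Sum>i\<le>n. rr th i * \<nu>g i * PK ys i else 0)" for th ys
  have Kknn: "0 \<le> Kk j y i" if "j \<in> J" "i \<le> n" for j y i unfolding Kk_def using Wnn[OF that(1)] nu(1) that(2) by simp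
  have PKnn: "0 \<le> PK ys i" if "i \<le> n" for ys i unfolding PK_def using Kknn that by (intro prod_nonneg) auto
  have rrnn: "th \<in> {1,2} \<Longrightarrow> 0 \<le> rr th i" for th i unfolding rr_def using sg_range[of i] by auto
  have F1: "(\<Sum>y\<in>Y j. Kk j y i) = ind i" if "j \<in> J" "i \<le> n" for j i
  proof -
    have "(\<Sum>y\<in>Y j. Kk j y i) = (\<Sum>y\<in>Y j. W j y i) / \<nu>g i" unfolding Kk_def by (rule sum_divide_distrib[symmetric])
    also have "\<dots> = \<nu>g i / \<nu>g i" using W3[OF that] by simp
    also have "\<dots> = ind i" unfolding ind_def by simp
    finally show ?thesis .
  qed
  have F2: "W j y i = 0" if "j \<in> J" "i \<le> n" "\<nu>g i = 0" "y \<in> Y j" for j y i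
  proof -
    have "(\<Sum>y\<in>Y j. W j y i) = 0" using W3 that by simp
    moreover have "\<forall>y. 0 \<le> W j y i" using Wnn that by simp
    moreover have "finite (Y j)" using finY that by simp
    ultimately show ?thesis using row_zero[of "Y j" "\<lambda>y. W j y i" y] that(4) by blast
  qed
  have ind01: "ind i ^ k = ind i" if "0 < k" for i k unfolding ind_def using that by auto
  have F3: "(\<Sum>ys\<in>PiE J Y. PK ys i) = ind i" if "i \<le> n" for i
  proof -
    have "(\<Sum>ys\<in>PiE J Y. PK ys i) = (\<Prod>j\<in>J. \<Sum>y\<in>Y j. Kk j y i)"
      unfolding PK_def by (rule prod_sum_PiE[symmetric]) (use finJ finY in auto)
    also have "\<dots> = (\<Prod>j\<in>J. ind i)" using F1 that by simp
    also have "\<dots> = ind i" using ind01 finJ neJ by (simp add: card_gt_0_iff)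
    finally show ?thesis .
  qed
  have F4: "(\<Sum>ys\<in>{ys \<in> PiE J Y. ys j0 = y0}. PK ys i) = Kk j0 y0 i * (\<Prod>j\<in>J - {j0}. ind i)"
    if j0: "j0 \<in> J" "y0 \<in> Y j0" "i \<le> n" for j0 y0 i
  proof -
    define f' where "f' j y = (if j = j0 \<and> y \<noteq> y0 then 0 else Kk j y i)" for j y
    have "(\<Sum>ys\<in>{ys \<in> PiE J Y. ys j0 = y0}. PK ys i) = (\<Sum>ys\<in>PiE J Y. if ys j0 = y0 then PK ys i else 0)"
      using finPi by (simp add: sum.inter_filter)
    also have "\<dots> = (\<Sum>ys\<in>PiE J Y. \<Prod>j\<in>J. f' j (ys j))"
    proof (rule sum.cong[OF refl])
      fix ys assume "ys \<in> PiE J Y"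
      show "(if ys j0 = y0 then PK ys i else 0) = (\<Prod>j\<in>J. f' j (ys j))"
      proof (cases "ys j0 = y0")
        case True
        have "PK ys i = (\<Prod>j\<in>J. f' j (ys j))" unfolding PK_def f'_def using True by (intro prod.cong) auto
        then show ?thesis using True by simp
      next
        case False
        have "(\<Prod>j\<in>J. f' j (ys j)) = 0" using False j0 finJ unfolding f'_def by (intro prod_zero) auto
        then show ?thesis using False by simp
      qed
    qed
    also have "\<dots> = (\<Prod>j\<in>J. \<Sum>y\<in>Y j. f' j y)"
      by (rule prod_sum_PiE[symmetric]) (use finJ finY in auto)
    also have "\<dots> = (\<Sum>y\<in>Y j0. f' j0 y) * (\<Prod>j\<in>J - {j0}. \<Sum>y\<in>Y j. f' j y)"
      using finJ j0 by (simp add: prod.remove)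
    also have "(\<Sum>y\<in>Y j0. f' j0 y) = Kk j0 y0 i"
    proof -
      have "(\<Sum>y\<in>Y j0. f' j0 y) = (\<Sum>y\<in>Y j0. if y = y0 then Kk j0 y0 i else 0)"
        unfolding f'_def by (rule sum.cong) auto
      also have "\<dots> = Kk j0 y0 i" using finY j0 by (simp add: sum.delta')
      finally show ?thesis .
    qed
    also have "(\<Prod>j\<in>J - {j0}. \<Sum>y\<in>Y j. f' j y) = (\<Prod>j\<in>J - {j0}. ind i)"
      by (rule prod.cong[OF refl]) (use F1 j0 in \<open>auto simp: f'_def\<close>)
    finally show ?thesis .
  qed
  have F5: "\<nu>g i * (Kk j0 y0 i * (\<Prod>j\<in>J - {j0}. ind i)) = W j0 y0 i"
    if j0: "j0 \<in> J" "y0 \<in> Y j0" "i \<le> n" for j0 y0 i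
  proof (cases "\<nu>g i = 0")
    case True then show ?thesis using F2 j0 by simp
  next
    case False
    then have "ind i = 1" unfolding ind_def by simp
    then show ?thesis unfolding Kk_def using False by simp
  qed
  have sumQ: "(\<Sum>ys\<in>S. Q th ys) = (\<Sum>i\<le>n. rr th i * \<nu>g i * (\<Sum>ys\<in>S. PK ys i))"
    if "S \<subseteq> PiE J Y" for S th
  proof -
    have "(\<Sum>ys\<in>S. Q th ys) = (\<Sum>ys\<in>S. \<Sum>i\<le>n. rr th i * \<nu>g i * PK ys i)"
      unfolding Q_def by (rule sum.cong) (use that in auto)
    also have "\<dots> = (\<Sum>i\<le>n. \<Sum>ys\<in>S. rr th i * \<nu>g i * PK ys i)" by (rule sum.swap)
    also have "\<dots> = (\<Sum>i\<le>n. rr th i * \<nu>g i * (\<Sum>ys\<in>S. PK ys i))" by (simp add: sum_distrib_left)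
    finally show ?thesis .
  qed
  have mean_nu: "(\<Sum>i\<le>n. \<nu>g i * sg i) = 1"
  proof -
    have "(\<Sum>i\<le>n. \<nu>g i * sg i) = (\<Sum>i\<le>n. \<nu>g i * max 0 (sg i - sg 0))"
      by (rule sum.cong) (use sg_range sg_0 in auto)
    also have "\<dots> = Dg 0" using nu(3) by simp
    finally show ?thesis using Dg0 by simp
  qed
  have nuind: "\<nu>g i * ind i = \<nu>g i" for i unfolding ind_def by simp
  have coup: "Q \<in> couplings {1,2} J Y P"
    unfolding couplings_def
  proof (rule CollectI, rule ballI, rule conjI)
    fix th :: nat assume th: "th \<in> {1,2}"
    show "prob_on (PiE J Y) (Q th)"
      unfolding prob_on_def
    proof (intro conjI allI impI)
      fix ys show "0 \<le> Q th ys" unfolding Q_def using rrnn[OF th] nu(1) PKnn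
        by (auto intro!: sum_nonneg mult_nonneg_nonneg)
    next
      fix ys assume "ys \<notin> PiE J Y" then show "Q th ys = 0" unfolding Q_def by simp
    next
      have "sum (Q th) (PiE J Y) = (\<Sum>i\<le>n. rr th i * \<nu>g i)"
        using sumQ[of "PiE J Y" th] F3 nuind by (simp add: mult.assoc)
      also have "\<dots> = 1"
      proof (cases "th = 1")
        case True then show ?thesis unfolding rr_def using mean_nu by (simp add: mult.commute)
      next
        case False
        then have "(\<Sum>i\<le>n. rr th i * \<nu>g i) = (\<Sum>i\<le>n. \<nu>g i) - (\<Sum>i\<le>n. \<nu>g i * sg i)"
          unfolding rr_def by (simp add: sum_subtractf[symmetric] algebra_simps)
        then show ?thesis using nu(2) mean_nu by simp
      qed
      finally show "sum (Q th) (PiE J Y) = 1" .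
    qed
  next
    fix th :: nat assume th: "th \<in> {1,2}"
    show "\<forall>j\<in>J. \<forall>y\<in>Y j. (\<Sum>ys\<in>{ys \<in> PiE J Y. ys j = y}. Q th ys) = P j th y"
    proof (intro ballI)
      fix j y assume j: "j \<in> J" and y: "y \<in> Y j"
      have "(\<Sum>ys\<in>{ys \<in> PiE J Y. ys j = y}. Q th ys) = (\<Sum>i\<le>n. rr th i * \<nu>g i * (Kk j y i * (\<Prod>j'\<in>J - {j}. ind i)))"
        using sumQ[of "{ys \<in> PiE J Y. ys j = y}" th] F4[OF j y] by simp
      also have "\<dots> = (\<Sum>i\<le>n. rr th i * W j y i)"
        by (rule sum.cong[OF refl]) (use F5[OF j y] in \<open>simp add: mult.assoc\<close>)
      also have "\<dots> = P j th y"
      proof (cases "th = 1")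
        case True then show ?thesis unfolding rr_def using W2[OF j y] by (simp add: mult.commute)
      next
        case False
        then have th2: "th = 2" using th by simp
        have "(\<Sum>i\<le>n. rr th i * W j y i) = (\<Sum>i\<le>n. W j y i) - (\<Sum>i\<le>n. W j y i * sg i)"
          unfolding rr_def using False by (simp add: sum_subtractf[symmetric] algebra_simps)
        then show ?thesis using W1[OF j y] W2[OF j y] th2 unfolding mm_def by simp
      qed
      finally show "(\<Sum>ys\<in>{ys \<in> PiE J Y. ys j = y}. Q th ys) = P j th y" .
    qed
  qed
  have val: "(\<Sum>ys\<in>PiE J Y. max 0 (Q 1 ys * d l 1 + Q 2 ys * d l 2)) \<le> Max ((\<lambda>j. Bv j l) ` J)"
    if l: "l \<in> {1..<n}" for l
  proof -
    have l1: "1 \<le> l" "l < n" using l by auto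
    have xy: "0 < xx l" "0 < yy l" using xy_pos l1 by auto
    define e where "e i = rr 1 i * d l 1 + rr 2 i * d l 2" for i
    have eeq: "e i = (xx l + yy l) * (sg i - sg l)" for i
    proof -
      have sgl: "(xx l + yy l) * sg l = yy l" using sg_cc[OF l1] xy unfolding cc_def by simp
      show ?thesis unfolding e_def rr_def xx_def yy_def using sgl unfolding xx_def yy_def
        by (simp add: algebra_simps)
    qed
    have "(\<Sum>ys\<in>PiE J Y. max 0 (Q 1 ys * d l 1 + Q 2 ys * d l 2))
        \<le> (\<Sum>ys\<in>PiE J Y. \<Sum>i\<le>n. \<nu>g i * PK ys i * max 0 (e i))"
    proof (rule sum_mono)
      fix ys assume ys: "ys \<in> PiE J Y"
      have "Q 1 ys * d l 1 + Q 2 ys * d l 2 = (\<Sum>i\<le>n. rr 1 i * \<nu>g i * PK ys i * d l 1) + (\<Sum>i\<le>n. rr 2 i * \<nu>g i * PK ys i * d l 2)"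
        unfolding Q_def using ys by (simp add: sum_distrib_right)
      also have "\<dots> = (\<Sum>i\<le>n. rr 1 i * \<nu>g i * PK ys i * d l 1 + rr 2 i * \<nu>g i * PK ys i * d l 2)"
        by (simp add: sum.distrib)
      also have "\<dots> = (\<Sum>i\<le>n. \<nu>g i * PK ys i * e i)"
        by (rule sum.cong) (simp_all add: e_def algebra_simps)
      finally have "Q 1 ys * d l 1 + Q 2 ys * d l 2 = (\<Sum>i\<le>n. \<nu>g i * PK ys i * e i)" .
      then have "max 0 (Q 1 ys * d l 1 + Q 2 ys * d l 2) \<le> (\<Sum>i\<le>n. max 0 (\<nu>g i * PK ys i * e i))"
        using max0_sum_le by metis
      also have "\<dots> = (\<Sum>i\<le>n. \<nu>g i * PK ys i * max 0 (e i))"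
        by (rule sum.cong[OF refl]) (use nu(1) PKnn max0_scale in auto)
      finally show "max 0 (Q 1 ys * d l 1 + Q 2 ys * d l 2) \<le> (\<Sum>i\<le>n. \<nu>g i * PK ys i * max 0 (e i))" .
    qed
    also have "\<dots> = (\<Sum>i\<le>n. \<nu>g i * max 0 (e i) * (\<Sum>ys\<in>PiE J Y. PK ys i))"
      by (subst sum.swap) (simp add: sum_distrib_left algebra_simps)
    also have "\<dots> = (\<Sum>i\<le>n. \<nu>g i * max 0 (e i))"
    proof (rule sum.cong[OF refl])
      fix i assume "i \<in> {..n}"
      then have "(\<Sum>ys\<in>PiE J Y. PK ys i) = ind i" using F3 by simp
      then show "\<nu>g i * max 0 (e i) * (\<Sum>ys\<in>PiE J Y. PK ys i) = \<nu>g i * max 0 (e i)"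
        using nuind[of i] by (metis mult.commute mult.left_commute)
    qed
    also have "\<dots> = (xx l + yy l) * (\<Sum>i\<le>n. \<nu>g i * max 0 (sg i - sg l))"
      unfolding eeq sum_distrib_left
    proof (rule sum.cong[OF refl])
      fix i assume "i \<in> {..n}"
      have "max 0 ((xx l + yy l) * (sg i - sg l)) = (xx l + yy l) * max 0 (sg i - sg l)"
        by (rule max0_scale) (use xy in simp)
      then show "\<nu>g i * max 0 ((xx l + yy l) * (sg i - sg l)) = (xx l + yy l) * (\<nu>g i * max 0 (sg i - sg l))"
        by simp
    qed
    also have "\<dots> = (xx l + yy l) * Dg l" using nu(3) l1 by simp
    also have "\<dots> = Max ((\<lambda>j. Bv j l) ` J)"
    proof -
      have "(xx l + yy l) * Dg l = Max ((\<lambda>z. (xx l + yy l) * z) ` ((\<lambda>j. call j (sg l)) ` J))"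
        unfolding Dg_def by (rule mono_Max_commute) (use xy finJ neJ in \<open>auto simp: mono_def\<close>)
      also have "\<dots> = Max ((\<lambda>j. Bv j l) ` J)"
        by (rule arg_cong[where f = Max]) (use Bv_call l1 in \<open>auto simp: image_image\<close>)
      finally show ?thesis .
    qed
    finally show ?thesis .
  qed
  show ?thesis using coup val by blast
qed

end

context dexp
begin

definition Mx :: "nat \<Rightarrow> real" where "Mx l = Max ((\<lambda>j. Bv j l) ` J)"

lemma finPiE: "finite (PiE J Y)" using finJ finY by (intro finite_PiE) auto

lemma pay_split:
  "payoff {1,2} J Y {1..n} u Q \<sigma> = (\<Sum>ys\<in>PiE J Y. Q 1 ys * mixed_util {1..n} u 1 (\<sigma> ys) + Q 2 ys * mixed_util {1..n} u 2 (\<sigma> ys))"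
  unfolding payoff_def by (simp add: sum.distrib)

lemma strat_props:
  assumes "\<sigma> \<in> strategies J Y {1..n}" "ys \<in> PiE J Y"
  shows "\<forall>a. 0 \<le> \<sigma> ys a" "sum (\<sigma> ys) {1..n} = 1"
  using assms unfolding strategies_def prob_on_def by auto

lemma coup_props:
  assumes "Q \<in> couplings {1,2} J Y P" "th \<in> {1,2}"
  shows "\<forall>ys. 0 \<le> Q th ys" "sum (Q th) (PiE J Y) = 1"
  using assms unfolding couplings_def prob_on_def by auto

lemma MU_tel:
  assumes th: "th = 1 \<or> th = 2"
  shows "mixed_util {1..n} u th \<alpha> = (\<Sum>a\<in>{1..n}. \<alpha> a * (\<Sum>l\<in>{1..<a}. d l th))"
  unfolding mixed_util_def by (rule sum.cong) (use u_tel th in auto)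

lemma pay_ub:
  assumes Q: "Q \<in> couplings {1,2} J Y P" and \<sigma>: "\<sigma> \<in> strategies J Y {1..n}"
  shows "payoff {1,2} J Y {1..n} u Q \<sigma> \<le> (\<Sum>l\<in>{1..<n}. \<Sum>ys\<in>PiE J Y. max 0 (Q 1 ys * d l 1 + Q 2 ys * d l 2))"
proof -
  define e where "e ys l = Q 1 ys * d l 1 + Q 2 ys * d l 2" for ys l
  have "payoff {1,2} J Y {1..n} u Q \<sigma> \<le> (\<Sum>ys\<in>PiE J Y. \<Sum>l\<in>{1..<n}. max 0 (e ys l))"
    unfolding pay_split
  proof (rule sum_mono)
    fix ys assume ys: "ys \<in> PiE J Y"
    have snn: "\<forall>a. 0 \<le> \<sigma> ys a" and ssum: "sum (\<sigma> ys) {1..n} = 1" using strat_props[OF \<sigma> ys] by auto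
    have "Q 1 ys * mixed_util {1..n} u 1 (\<sigma> ys) + Q 2 ys * mixed_util {1..n} u 2 (\<sigma> ys)
        = (\<Sum>a\<in>{1..n}. \<sigma> ys a * (\<Sum>l\<in>{1..<a}. e ys l))"
    proof -
      have m1: "mixed_util {1..n} u 1 (\<sigma> ys) = (\<Sum>a\<in>{1..n}. \<sigma> ys a * (\<Sum>l\<in>{1..<a}. d l 1))" by (rule MU_tel) simp
      have m2: "mixed_util {1..n} u 2 (\<sigma> ys) = (\<Sum>a\<in>{1..n}. \<sigma> ys a * (\<Sum>l\<in>{1..<a}. d l 2))" by (rule MU_tel) simp
      have "Q 1 ys * mixed_util {1..n} u 1 (\<sigma> ys) + Q 2 ys * mixed_util {1..n} u 2 (\<sigma> ys)
         = (\<Sum>a\<in>{1..n}. Q 1 ys * (\<sigma> ys a * (\<Sum>l\<in>{1..<a}. d l 1)) + Q 2 ys * (\<sigma> ys a * (\<Sum>l\<in>{1..<a}. d l 2)))"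
        unfolding m1 m2 by (simp add: sum_distrib_left sum.distrib)
      also have "\<dots> = (\<Sum>a\<in>{1..n}. \<sigma> ys a * (\<Sum>l\<in>{1..<a}. e ys l))"
      proof (rule sum.cong[OF refl])
        fix a
        have "(\<Sum>l\<in>{1..<a}. e ys l) = Q 1 ys * (\<Sum>l\<in>{1..<a}. d l 1) + Q 2 ys * (\<Sum>l\<in>{1..<a}. d l 2)"
          unfolding e_def by (simp add: sum_distrib_left sum.distrib)
        then show "Q 1 ys * (\<sigma> ys a * (\<Sum>l\<in>{1..<a}. d l 1)) + Q 2 ys * (\<sigma> ys a * (\<Sum>l\<in>{1..<a}. d l 2))
            = \<sigma> ys a * (\<Sum>l\<in>{1..<a}. e ys l)" by (simp add: algebra_simps)
      qed
      finally show ?thesis .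
    qed
    also have "\<dots> \<le> (\<Sum>a\<in>{1..n}. \<sigma> ys a * (\<Sum>l\<in>{1..<n}. max 0 (e ys l)))"
    proof (rule sum_mono)
      fix a assume a: "a \<in> {1..n}"
      have "(\<Sum>l\<in>{1..<a}. e ys l) \<le> (\<Sum>l\<in>{1..<a}. max 0 (e ys l))" by (rule sum_mono) simp
      also have "\<dots> \<le> (\<Sum>l\<in>{1..<n}. max 0 (e ys l))" by (rule sum_mono2) (use a in auto)
      finally show "\<sigma> ys a * (\<Sum>l\<in>{1..<a}. e ys l) \<le> \<sigma> ys a * (\<Sum>l\<in>{1..<n}. max 0 (e ys l))"
        using snn by (simp add: mult_left_mono)
    qed
    also have "\<dots> = (\<Sum>l\<in>{1..<n}. max 0 (e ys l))" using ssum by (simp add: sum_distrib_right[symmetric])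
    finally show "Q 1 ys * mixed_util {1..n} u 1 (\<sigma> ys) + Q 2 ys * mixed_util {1..n} u 2 (\<sigma> ys) \<le> (\<Sum>l\<in>{1..<n}. max 0 (e ys l))" .
  qed
  also have "\<dots> = (\<Sum>l\<in>{1..<n}. \<Sum>ys\<in>PiE J Y. max 0 (e ys l))" by (rule sum.swap)
  finally show ?thesis unfolding e_def .
qed

lemma pay_lb:
  assumes Q: "Q \<in> couplings {1,2} J Y P" and \<sigma>: "\<sigma> \<in> strategies J Y {1..n}"
  shows "- (\<Sum>a\<in>{1..n}. \<bar>u 1 a\<bar> + \<bar>u 2 a\<bar>) \<le> payoff {1,2} J Y {1..n} u Q \<sigma>"
proof -
  define B where "B = (\<Sum>a\<in>{1..n}. \<bar>u 1 a\<bar> + \<bar>u 2 a\<bar>)"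
  have mub: "- (\<Sum>a\<in>{1..n}. \<bar>u th a\<bar>) \<le> mixed_util {1..n} u th (\<sigma> ys)" if ys: "ys \<in> PiE J Y" for th ys
  proof -
    have snn: "\<forall>a. 0 \<le> \<sigma> ys a" and ssum: "sum (\<sigma> ys) {1..n} = 1" using strat_props[OF \<sigma> ys] by auto
    have le1: "\<sigma> ys a \<le> 1" if "a \<in> {1..n}" for a
    proof -
      have "\<sigma> ys a \<le> sum (\<sigma> ys) {1..n}" by (rule member_le_sum) (use snn that in auto)
      then show ?thesis using ssum by simp
    qed
    have "(\<Sum>a\<in>{1..n}. - \<bar>u th a\<bar>) \<le> mixed_util {1..n} u th (\<sigma> ys)"
      unfolding mixed_util_def
    proof (rule sum_mono)
      fix a assume a: "a \<in> {1..n}"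
      have "- \<bar>u th a\<bar> \<le> \<sigma> ys a * (- \<bar>u th a\<bar>)" using le1[OF a] snn by (simp add: mult_left_le_one_le)
      also have "\<dots> \<le> \<sigma> ys a * u th a" using snn by (intro mult_left_mono) auto
      finally show "- \<bar>u th a\<bar> \<le> \<sigma> ys a * u th a" .
    qed
    then show ?thesis by (simp add: sum_negf)
  qed
  have "(\<Sum>ys\<in>PiE J Y. Q 1 ys * (- (\<Sum>a\<in>{1..n}. \<bar>u 1 a\<bar>)) + Q 2 ys * (- (\<Sum>a\<in>{1..n}. \<bar>u 2 a\<bar>)))
        \<le> payoff {1,2} J Y {1..n} u Q \<sigma>"
    unfolding pay_split
  proof (rule sum_mono)
    fix ys assume ys: "ys \<in> PiE J Y"
    have q: "0 \<le> Q 1 ys" "0 \<le> Q 2 ys" using coup_props[OF Q] by auto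
    show "Q 1 ys * (- (\<Sum>a\<in>{1..n}. \<bar>u 1 a\<bar>)) + Q 2 ys * (- (\<Sum>a\<in>{1..n}. \<bar>u 2 a\<bar>))
        \<le> Q 1 ys * mixed_util {1..n} u 1 (\<sigma> ys) + Q 2 ys * mixed_util {1..n} u 2 (\<sigma> ys)"
      using mub[OF ys, of 1] mub[OF ys, of 2] q by (intro add_mono mult_left_mono) auto
  qed
  moreover have "(\<Sum>ys\<in>PiE J Y. Q 1 ys * (- (\<Sum>a\<in>{1..n}. \<bar>u 1 a\<bar>)) + Q 2 ys * (- (\<Sum>a\<in>{1..n}. \<bar>u 2 a\<bar>))) = - B"
  proof -
    have "(\<Sum>ys\<in>PiE J Y. Q 1 ys * (- (\<Sum>a\<in>{1..n}. \<bar>u 1 a\<bar>)) + Q 2 ys * (- (\<Sum>a\<in>{1..n}. \<bar>u 2 a\<bar>)))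
       = sum (Q 1) (PiE J Y) * (- (\<Sum>a\<in>{1..n}. \<bar>u 1 a\<bar>)) + sum (Q 2) (PiE J Y) * (- (\<Sum>a\<in>{1..n}. \<bar>u 2 a\<bar>))"
      by (simp only: sum.distrib sum_distrib_right)
    also have "\<dots> = - B" using coup_props(2)[OF Q, of 1] coup_props(2)[OF Q, of 2] unfolding B_def
      by (simp add: sum.distrib)
    finally show ?thesis .
  qed
  ultimately show ?thesis unfolding B_def by simp
qed


lemma inf_le:
  assumes \<sigma>: "\<sigma> \<in> strategies J Y {1..n}"
  shows "(INF Q\<in>couplings {1,2} J Y P. payoff {1,2} J Y {1..n} u Q \<sigma>) \<le> (\<Sum>l\<in>{1..<n}. Mx l)"
proof -
  obtain Qs where Qs: "Qs \<in> couplings {1,2} J Y P"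
    and W: "\<forall>l\<in>{1..<n}. (\<Sum>ys\<in>PiE J Y. max 0 (Qs 1 ys * d l 1 + Qs 2 ys * d l 2)) \<le> Max ((\<lambda>j. Bv j l) ` J)"
    using exists_Q by blast
  have bdd: "bdd_below ((\<lambda>Q. payoff {1,2} J Y {1..n} u Q \<sigma>) ` couplings {1,2} J Y P)"
    unfolding bdd_below_def using pay_lb[OF _ \<sigma>] by blast
  have "(INF Q\<in>couplings {1,2} J Y P. payoff {1,2} J Y {1..n} u Q \<sigma>) \<le> payoff {1,2} J Y {1..n} u Qs \<sigma>"
    by (rule cINF_lower[OF bdd Qs])
  also have "\<dots> \<le> (\<Sum>l\<in>{1..<n}. \<Sum>ys\<in>PiE J Y. max 0 (Qs 1 ys * d l 1 + Qs 2 ys * d l 2))"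
    by (rule pay_ub[OF Qs \<sigma>])
  also have "\<dots> \<le> (\<Sum>l\<in>{1..<n}. Mx l)" unfolding Mx_def by (rule sum_mono) (use W in auto)
  finally show ?thesis .
qed

lemma strat_ne: "(\<lambda>ys a. if a = 1 then 1 else 0) \<in> strategies J Y {1..n}"
  unfolding strategies_def prob_on_def using n1 by auto

lemma Vmulti_ub: "Vmulti {1,2} J Y P {1..n} u \<le> (\<Sum>l\<in>{1..<n}. Mx l)"
  unfolding Vmulti_def by (rule cSUP_least) (use strat_ne inf_le in auto)

lemma Vmulti_lb: "(\<Sum>l\<in>{1..<n}. Mx l) \<le> Vmulti {1,2} J Y P {1..n} u"
proof -
  have "\<forall>l. \<exists>j. j \<in> J \<and> Mx l = Bv j l"
  proof
    fix l
    have "Mx l \<in> (\<lambda>j. Bv j l) ` J" unfolding Mx_def using finJ neJ by (intro Max_in) auto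
    then show "\<exists>j. j \<in> J \<and> Mx l = Bv j l" by auto
  qed
  then obtain jl where jl: "\<And>l. jl l \<in> J" "\<And>l. Mx l = Bv (jl l) l" by metis
  define E where "E l y = P (jl l) 1 y * d l 1 + P (jl l) 2 y * d l 2" for l y
  define ind where "ind l y = (if 0 < E l y then (1::real) else 0)" for l y
  define cf where "cf ys l = ind l (ys (jl l))" for ys :: "nat \<Rightarrow> 'y" and l
  have "\<forall>ys. \<exists>\<alpha>. prob_on {1..n} \<alpha> \<and> (\<forall>th\<in>{1,2}. (\<Sum>l\<in>{1..<n}. cf ys l * d l th) \<le> mixed_util {1..n} u th \<alpha>)"
  proof
    fix ys
    show "\<exists>\<alpha>. prob_on {1..n} \<alpha> \<and> (\<forall>th\<in>{1,2}. (\<Sum>l\<in>{1..<n}. cf ys l * d l th) \<le> mixed_util {1..n} u th \<alpha>)"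
      by (rule ZD) (auto simp: cf_def ind_def)
  qed
  then obtain \<sigma>s where \<sigma>s: "\<And>ys. prob_on {1..n} (\<sigma>s ys)"
    "\<And>ys th. th \<in> {1,2} \<Longrightarrow> (\<Sum>l\<in>{1..<n}. cf ys l * d l th) \<le> mixed_util {1..n} u th (\<sigma>s ys)"
    by metis
  have sS: "\<sigma>s \<in> strategies J Y {1..n}" unfolding strategies_def using \<sigma>s(1) by auto
  have pl: "(\<Sum>l\<in>{1..<n}. Mx l) \<le> payoff {1,2} J Y {1..n} u Q \<sigma>s" if Q: "Q \<in> couplings {1,2} J Y P" for Q
  proof -
    have qnn: "\<And>th ys. th \<in> {1,2} \<Longrightarrow> 0 \<le> Q th ys" using coup_props[OF Q] by blast
    have "(\<Sum>ys\<in>PiE J Y. Q 1 ys * (\<Sum>l\<in>{1..<n}. cf ys l * d l 1) + Q 2 ys * (\<Sum>l\<in>{1..<n}. cf ys l * d l 2))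
        \<le> payoff {1,2} J Y {1..n} u Q \<sigma>s"
      unfolding pay_split
      by (rule sum_mono, rule add_mono) (use qnn \<sigma>s(2) in \<open>auto intro!: mult_left_mono\<close>)
    moreover have "(\<Sum>ys\<in>PiE J Y. Q 1 ys * (\<Sum>l\<in>{1..<n}. cf ys l * d l 1) + Q 2 ys * (\<Sum>l\<in>{1..<n}. cf ys l * d l 2))
        = (\<Sum>l\<in>{1..<n}. Mx l)"
    proof -
      have "(\<Sum>ys\<in>PiE J Y. Q 1 ys * (\<Sum>l\<in>{1..<n}. cf ys l * d l 1) + Q 2 ys * (\<Sum>l\<in>{1..<n}. cf ys l * d l 2))
          = (\<Sum>l\<in>{1..<n}. (\<Sum>ys\<in>PiE J Y. Q 1 ys * (ind l (ys (jl l)) * d l 1)) + (\<Sum>ys\<in>PiE J Y. Q 2 ys * (ind l (ys (jl l)) * d l 2)))"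
        unfolding cf_def by (simp add: sum_distrib_left sum.distrib sum.swap[of _ "PiE J Y"])
      also have "\<dots> = (\<Sum>l\<in>{1..<n}. (\<Sum>y\<in>Y (jl l). P (jl l) 1 y * (ind l y * d l 1)) + (\<Sum>y\<in>Y (jl l). P (jl l) 2 y * (ind l y * d l 2)))"
      proof (rule sum.cong[OF refl])
        fix l
        have a: "(\<Sum>ys\<in>PiE J Y. Q 1 ys * (ind l (ys (jl l)) * d l 1)) = (\<Sum>y\<in>Y (jl l). P (jl l) 1 y * (ind l y * d l 1))"
          using marg[OF finJ finY Q, where th=1 and j="jl l" and g="\<lambda>y. ind l y * d l 1"] jl(1) by simp
        have b: "(\<Sum>ys\<in>PiE J Y. Q 2 ys * (ind l (ys (jl l)) * d l 2)) = (\<Sum>y\<in>Y (jl l). P (jl l) 2 y * (ind l y * d l 2))"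
          using marg[OF finJ finY Q, where th=2 and j="jl l" and g="\<lambda>y. ind l y * d l 2"] jl(1) by simp
        show "(\<Sum>ys\<in>PiE J Y. Q 1 ys * (ind l (ys (jl l)) * d l 1)) + (\<Sum>ys\<in>PiE J Y. Q 2 ys * (ind l (ys (jl l)) * d l 2))
          = (\<Sum>y\<in>Y (jl l). P (jl l) 1 y * (ind l y * d l 1)) + (\<Sum>y\<in>Y (jl l). P (jl l) 2 y * (ind l y * d l 2))"
          using a b by simp
      qed
      also have "\<dots> = (\<Sum>l\<in>{1..<n}. Mx l)"
      proof (rule sum.cong[OF refl])
        fix l
        have "(\<Sum>y\<in>Y (jl l). P (jl l) 1 y * (ind l y * d l 1)) + (\<Sum>y\<in>Y (jl l). P (jl l) 2 y * (ind l y * d l 2))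
            = (\<Sum>y\<in>Y (jl l). ind l y * E l y)"
          unfolding E_def by (simp add: sum.distrib[symmetric] algebra_simps)
        also have "\<dots> = (\<Sum>y\<in>Y (jl l). max 0 (E l y))" unfolding ind_def by (rule sum.cong) auto
        also have "\<dots> = Mx l" unfolding jl(2) Bv_def E_def by simp
        finally show "(\<Sum>y\<in>Y (jl l). P (jl l) 1 y * (ind l y * d l 1)) + (\<Sum>y\<in>Y (jl l). P (jl l) 2 y * (ind l y * d l 2)) = Mx l" .
      qed
      finally show ?thesis .
    qed
    ultimately show ?thesis by simp
  qed
  obtain Qs where Qs: "Qs \<in> couplings {1,2} J Y P" using exists_Q by blast
  have "(\<Sum>l\<in>{1..<n}. Mx l) \<le> (INF Q\<in>couplings {1,2} J Y P. payoff {1,2} J Y {1..n} u Q \<sigma>s)"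
    by (rule cINF_greatest) (use Qs pl in auto)
  also have "\<dots> \<le> Vmulti {1,2} J Y P {1..n} u"
    unfolding Vmulti_def
  proof (rule cSUP_upper[OF sS])
    show "bdd_above ((\<lambda>\<sigma>. INF Q\<in>couplings {1,2} J Y P. payoff {1,2} J Y {1..n} u Q \<sigma>) ` strategies J Y {1..n})"
      unfolding bdd_above_def using inf_le by blast
  qed
  finally show ?thesis .
qed

lemma Vmulti_eq: "Vmulti {1,2} J Y P {1..n} u = (\<Sum>l\<in>{1..<n}. Mx l)"
  using Vmulti_ub Vmulti_lb by simp

end

theorem corollary1:
  fixes m n :: nat
    and Y :: "nat \<Rightarrow> 'y set"
    and P :: "nat \<Rightarrow> nat \<Rightarrow> 'y \<Rightarrow> real"
    and u :: "nat \<Rightarrow> nat \<Rightarrow> real"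
  assumes m2: "2 \<le> m"
    and n1: "1 \<le> n"
    and finY: "\<forall>j\<in>{1..m}. finite (Y j)"
    and expP: "\<forall>j\<in>{1..m}. \<forall>th\<in>{1,2}. prob_on (Y j) (P j th)"
    and incr1: "\<forall>i\<in>{1..<n}. u 1 i < u 1 (Suc i)"
    and decr2: "\<forall>i\<in>{1..<n}. u 2 i > u 2 (Suc i)"
    and zero1: "u 1 1 = 0 \<and> u 2 1 = 0"
    and undom: "\<forall>i\<in>{1..n}. \<not> (\<exists>\<alpha>. prob_on ({1..n} - {i}) \<alpha> \<and>
                    (\<forall>th\<in>{1,2}. u th i \<le> mixed_util ({1..n} - {i}) u th \<alpha>))"
  shows "\<forall>j\<in>{1..m}.
           (Vmulti {1,2} {1..m} Y P {1..n} u = Vmulti {1,2} ({1..m} - {j}) Y P {1..n} u)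
           \<longleftrightarrow> (\<forall>l\<in>{1..n-1}.
                  Vsingle {1,2} (Y j) (P j) {0,1} (canon_u u l)
                  \<le> Max ((\<lambda>j'. Vsingle {1,2} (Y j') (P j') {0,1} (canon_u u l)) ` ({1..m} - {j})))"
proof
  fix j assume j: "j \<in> {1..m}"
  interpret D: dprob n u using n1 incr1 decr2 zero1 undom by unfold_locales
  define J1 where "J1 = {1..m}"
  define J2 where "J2 = {1..m} - {j}"
  have J2ne: "J2 \<noteq> {}"
  proof -
    have "(if j = 1 then 2 else 1) \<in> J2" unfolding J2_def using m2 j by auto
    then show ?thesis by auto
  qed
  have J2fin: "finite J2" unfolding J2_def by simp
  interpret E1: dexp n u J1 Y P
    by unfold_locales (use finY expP j in \<open>auto simp: J1_def\<close>)
  interpret E2: dexp n u J2 Y P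
    by unfold_locales (use finY expP J2ne in \<open>auto simp: J2_def\<close>)
  define B where "B j' l = (\<Sum>y\<in>Y j'. max 0 (P j' 1 y * D.d l 1 + P j' 2 y * D.d l 2))" for j' l
  have VB: "Vsingle {1,2} (Y j') (P j') {0,1} (canon_u u l) = B j' l" if "j' \<in> {1..m}" for j' l
    unfolding B_def
    by (rule Vsingle_binary) (use finY that in \<open>auto simp: canon_u_def D.d_def\<close>)
  have B1: "E1.Bv j' l = B j' l" for j' l unfolding E1.Bv_def B_def by simp
  have B2: "E2.Bv j' l = B j' l" for j' l unfolding E2.Bv_def B_def by simp
  have M1: "E1.Mx l = Max ((\<lambda>j'. B j' l) ` J1)" for l unfolding E1.Mx_def B1 by simp
  have M2: "E2.Mx l = Max ((\<lambda>j'. B j' l) ` J2)" for l unfolding E2.Mx_def B2 by simp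
  have J1ins: "J1 = insert j J2" unfolding J1_def J2_def using j by auto
  have M12: "E1.Mx l = max (B j l) (E2.Mx l)" for l
    unfolding M1 M2 unfolding J1ins using J2ne J2fin by simp
  have V1: "Vmulti {1,2} {1..m} Y P {1..n} u = (\<Sum>l\<in>{1..<n}. E1.Mx l)"
    using E1.Vmulti_eq unfolding J1_def by simp
  have V2: "Vmulti {1,2} ({1..m} - {j}) Y P {1..n} u = (\<Sum>l\<in>{1..<n}. E2.Mx l)"
    using E2.Vmulti_eq unfolding J2_def by simp
  have ge: "E2.Mx l \<le> E1.Mx l" for l using M12 by simp
  have "(\<Sum>l\<in>{1..<n}. E1.Mx l) = (\<Sum>l\<in>{1..<n}. E2.Mx l) \<longleftrightarrow> (\<forall>l\<in>{1..<n}. E1.Mx l = E2.Mx l)"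
  proof
    assume eq: "(\<Sum>l\<in>{1..<n}. E1.Mx l) = (\<Sum>l\<in>{1..<n}. E2.Mx l)"
    have "(\<Sum>l\<in>{1..<n}. E1.Mx l - E2.Mx l) = 0" using eq by (simp add: sum_subtractf)
    then have "\<forall>l\<in>{1..<n}. E1.Mx l - E2.Mx l = 0"
      using sum_nonneg_eq_0_iff[of "{1..<n}" "\<lambda>l. E1.Mx l - E2.Mx l"] ge by simp
    then show "\<forall>l\<in>{1..<n}. E1.Mx l = E2.Mx l" by simp
  next
    assume "\<forall>l\<in>{1..<n}. E1.Mx l = E2.Mx l"
    then show "(\<Sum>l\<in>{1..<n}. E1.Mx l) = (\<Sum>l\<in>{1..<n}. E2.Mx l)" by (intro sum.cong) auto
  qed
  also have "\<dots> \<longleftrightarrow> (\<forall>l\<in>{1..<n}. B j l \<le> E2.Mx l)" using M12 by (auto simp: max_def)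
  also have "\<dots> \<longleftrightarrow> (\<forall>l\<in>{1..n-1}.
                  Vsingle {1,2} (Y j) (P j) {0,1} (canon_u u l)
                  \<le> Max ((\<lambda>j'. Vsingle {1,2} (Y j') (P j') {0,1} (canon_u u l)) ` ({1..m} - {j})))"
  proof -
    have r: "{1..n-1} = {1..<n}" using n1 by auto
    have im: "(\<lambda>j'. Vsingle {1,2} (Y j') (P j') {0,1} (canon_u u l)) ` ({1..m} - {j}) = (\<lambda>j'. B j' l) ` J2" for l
      unfolding J2_def by (rule image_cong) (use VB in auto)
    show ?thesis unfolding r im VB[OF j] M2 by simp
  qed
  finally show "(Vmulti {1,2} {1..m} Y P {1..n} u = Vmulti {1,2} ({1..m} - {j}) Y P {1..n} u)
           \<longleftrightarrow> (\<forall>l\<in>{1..n-1}.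
                  Vsingle {1,2} (Y j) (P j) {0,1} (canon_u u l)
                  \<le> Max ((\<lambda>j'. Vsingle {1,2} (Y j') (P j') {0,1} (canon_u u l)) ` ({1..m} - {j})))"
    unfolding V1 V2 .
qed

end
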